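(* Let $D,\Delta,\beta,N_1,N_2,p\in\mathbb N$ with $\Delta\ge2$. The number of isomorphism classes of grounded decorated landscapes of type $(D,\Delta,\beta,N_1,N_2,p)$ is at most $$C\cdot N_2^{N_1}\cdot\left(\frac{\Delta^\Delta}{(\Delta-1)^{\Delta-1}}\cdot\beta\right)^{N_2},$$ where $C$ depends only on $(D,\Delta,N_1,p)$ (and the fixed number $b$).
   Context: Fix $b\ge2$, identified with $\{0,\dots,b-1\}$. An oriented graph is a set $V$ with $E\subseteq V\times V$ (self-loops allowed). A variable graph is an oriented graph $G$ together with well-orders on $\mathrm{Var}(x)=\{y:(x,y)\in E\}$ and $\mathrm{Cl}(x)=\{y:(y,x)\in E\}$ for each $x$. $\mathrm{Rel}(G)$ is the oriented graph on $V(G)$ with edge $(x,y)$ iff $\mathrm{Var}(x)\cap\mathrm{Var}(y)\ne\emptyset$; the degree of $x$ in $\mathrm{Rel}(G)$ is the number of such $y$ (including possibly $x$). The edges out of $x$ in $\mathrm{Rel}(G)$ are labelled by distinct natural numbers according to the order: for distinct $y,z$, let $v,w$ be the least elements of $\mathrm{Var}(x)\cap\mathrm{Var}(y)$, $\mathrm{Var}(x)\cap\mathrm{Var}(z)$ in $\mathrm{Var}(x)$; $y<z$ if $v<w$, or $v=w$ and $y<z$ in $\mathrm{Cl}(v)$. $\mathrm{Canvas}(G)$ has vertex set $V(G)\times\mathbb N$ and, for every edge $(x,y)$ of $\mathrm{Rel}(G)$ and $i\in\mathbb N$, an edge $((x,i),(y,i+1))$ with the label of $(x,y)$. For $x=(\bar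 x,i)$, $\ell(x)=i$ is its level. A local rule $\mathbf R$ on $G$ assigns $\mathbf R(x)\subseteq b^{\mathrm{Var}(x)}$; $\mathbf R^c(x)=b^{\mathrm{Var}(x)}\setminus\mathbf R(x)$. A pseudo-landscape $\mathcal L$ is a triple: a variable graph $G_{\mathcal L}$, a local rule $\mathbf R_{\mathcal L}$ on it, and a subgraph $\mathrm{For}(\mathcal L)$ of $\mathrm{Canvas}(G_{\mathcal L})$ (with inherited labels) in which every vertex has in-degree $0$ or $1$; $V(\mathcal L)$ is its vertex set and $V(\mathcal L)_i$ its level-$i$ vertices. It is a landscape if for all $i$ and distinct $x,y\in V(\mathcal L)_i$ the distance between $\bar x$ and $\bar y$ in $\mathrm{Rel}(G_{\mathcal L})$ is at least $2$. It is grounded if the root (vertex of minimal level) of every connected component of $\mathrm{For}(\mathcal L)$ has level $0$. It is of type $(D,\Delta,\beta)$ if out-degrees in $G_{\mathcal L}$ are $\le D$, degrees in $\mathrm{Rel}(G_{\mathcal L})$ are $\le\Delta$, and $|\mathbf R^c_{\mathcal L}(x)|\le\beta$ for all $x$. A decoration consists of $\mathrm{Final}(\mathcal L)\in b^{V(G_{\mathcal L})}$, for each $x\in V(\mathcal L)$ an element $\mathrm{Prev}(x)\in\mathbf R^c_{\mathcal L}(\bar x)$, and a function $\pi\colon V(G_{\mathcal L})\to\mathbb N$. A decorated landscape is of type $(D,\Delta,\beta,N_1,N_2,p)$ if it is of type $(D,\Delta,\beta)$, $|V(G_{\mathcal L})|\le N_1$, $|V(\mathcal L)|=N_2$ and $\pi$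 takes values in $\{0,\dots,p-1\}$. An isomorphism of decorated landscapes is a bijection of the vertex sets of the variable graphs inducing an isomorphism of the graphs compatible with the orders on all $\mathrm{Var}(x),\mathrm{Cl}(x)$ and with the local rules, inducing an isomorphism of the forests, and compatible with the decorations. *)

theory Defs
  imports Complex_Main "HOL-Library.FuncSet"
begin

text \<open>Decorated pseudo-landscapes with vertices drawn from nat.  Every decorated landscape
with finitely many vertices is isomorphic to one of this form, so counting isomorphism
classes of these counts all isomorphism classes.\<close>

record dland =
  vg_verts  :: "nat set"
  vg_edges  :: "(nat \<times> nat) set"
  vg_varord :: "nat \<Rightarrow> nat rel"
  vg_clord  :: "nat \<Rightarrow> nat rel"
  dl_rule   :: "nat \<Rightarrow> (nat \<Rightarrow> nat) set"
  dl_fverts :: "(nat \<times> nat) set"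
  dl_fedges :: "((nat \<times> nat) \<times> (nat \<times> nat) \<times> nat) set"  \<comment> \<open>labelled edges (source, target, label)\<close>
  dl_final  :: "nat \<Rightarrow> nat"
  dl_prev   :: "nat \<times> nat \<Rightarrow> nat \<Rightarrow> nat"
  dl_pi     :: "nat \<Rightarrow> nat"

definition Var :: "dland \<Rightarrow> nat \<Rightarrow> nat set" where
  "Var L x = {y. (x, y) \<in> vg_edges L}"

definition Cl :: "dland \<Rightarrow> nat \<Rightarrow> nat set" where
  "Cl L x = {y. (y, x) \<in> vg_edges L}"

definition variable_graph :: "dland \<Rightarrow> bool" where
  "variable_graph L \<longleftrightarrow> vg_edges L \<subseteq> vg_verts L \<times> vg_verts L \<and>
     (\<forall>x\<in>vg_verts L. well_order_on (Var L x) (vg_varord L x) \<and>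
                     well_order_on (Cl L x) (vg_clord L x))"

definition relE :: "dland \<Rightarrow> (nat \<times> nat) set" where
  "relE L = {(x, y). x \<in> vg_verts L \<and> y \<in> vg_verts L \<and> Var L x \<inter> Var L y \<noteq> {}}"

definition rel_deg :: "dland \<Rightarrow> nat \<Rightarrow> nat" where
  "rel_deg L x = card {y. (x, y) \<in> relE L}"

definition wo_least :: "nat rel \<Rightarrow> nat set \<Rightarrow> nat" where
  "wo_least r A = (THE v. v \<in> A \<and> (\<forall>w\<in>A. (v, w) \<in> r))"

definition rel_less :: "dland \<Rightarrow> nat \<Rightarrow> nat \<Rightarrow> nat \<Rightarrow> bool" where
  "rel_less L x y z \<longleftrightarrow> y \<noteq> z \<and>
     (let v = wo_least (vg_varord L x) (Var L x \<inter> Var L y);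
          w = wo_least (vg_varord L x) (Var L x \<inter> Var L z)
      in (v \<noteq> w \<and> (v, w) \<in> vg_varord L x) \<or> (v = w \<and> (y, z) \<in> vg_clord L v))"

definition rel_label :: "dland \<Rightarrow> nat \<Rightarrow> nat \<Rightarrow> nat" where
  "rel_label L x y = card {z. (x, z) \<in> relE L \<and> rel_less L x z y}"

definition canvasE :: "dland \<Rightarrow> ((nat \<times> nat) \<times> (nat \<times> nat) \<times> nat) set" where
  "canvasE L = {((x, i), (y, Suc i), rel_label L x y) | x y i. (x, y) \<in> relE L}"

definition assign :: "nat \<Rightarrow> nat set \<Rightarrow> (nat \<Rightarrow> nat) set" where
  "assign b A = A \<rightarrow>\<^sub>E {..<b}"

definition Rc :: "nat \<Rightarrow> dland \<Rightarrow> nat \<Rightarrow> (nat \<Rightarrow> nat) set" where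
  "Rc b L x = assign b (Var L x) - dl_rule L x"

definition pseudo_landscape :: "nat \<Rightarrow> dland \<Rightarrow> bool" where
  "pseudo_landscape b L \<longleftrightarrow> variable_graph L \<and>
     (\<forall>x\<in>vg_verts L. dl_rule L x \<subseteq> assign b (Var L x)) \<and>
     dl_fverts L \<subseteq> vg_verts L \<times> UNIV \<and>
     (\<forall>(u, v, l)\<in>dl_fedges L. u \<in> dl_fverts L \<and> v \<in> dl_fverts L \<and> (u, v, l) \<in> canvasE L) \<and>
     (\<forall>v\<in>dl_fverts L. card {e\<in>dl_fedges L. fst (snd e) = v} \<le> 1)"

definition landscape :: "nat \<Rightarrow> dland \<Rightarrow> bool" where
  "landscape b L \<longleftrightarrow> pseudo_landscape b L \<and>
     (\<forall>u\<in>dl_fverts L. \<forall>v\<in>dl_fverts L. u \<noteq> v \<and> snd u = snd v \<longrightarrow>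
        fst u \<noteq> fst v \<and> (fst u, fst v) \<notin> relE L)"

definition forest_rel :: "dland \<Rightarrow> ((nat \<times> nat) \<times> (nat \<times> nat)) set" where
  "forest_rel L = {(u, v). \<exists>l. (u, v, l) \<in> dl_fedges L}"

text \<open>Grounded: the minimal level in each connected component of For(L) is 0.\<close>
definition grounded :: "dland \<Rightarrow> bool" where
  "grounded L \<longleftrightarrow> (\<forall>u\<in>dl_fverts L. \<exists>v. (u, v) \<in> (forest_rel L \<union> (forest_rel L)\<inverse>)\<^sup>* \<and> snd v = 0)"

definition decoration_ok :: "nat \<Rightarrow> nat \<Rightarrow> dland \<Rightarrow> bool" where
  "decoration_ok b p L \<longleftrightarrow> dl_final L \<in> assign b (vg_verts L) \<and>
     (\<forall>u\<in>dl_fverts L. dl_prev L u \<in> Rc b L (fst u)) \<and>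
     (\<forall>x\<in>vg_verts L. dl_pi L x < p)"

definition of_type :: "nat \<Rightarrow> nat \<Rightarrow> nat \<Rightarrow> nat \<Rightarrow> nat \<Rightarrow> nat \<Rightarrow> nat \<Rightarrow> dland \<Rightarrow> bool" where
  "of_type b D \<Delta> \<beta> N1 N2 p L \<longleftrightarrow>
     (\<forall>x\<in>vg_verts L. card (Var L x) \<le> D \<and> rel_deg L x \<le> \<Delta> \<and> card (Rc b L x) \<le> \<beta>) \<and>
     finite (vg_verts L) \<and> card (vg_verts L) \<le> N1 \<and>
     finite (dl_fverts L) \<and> card (dl_fverts L) = N2 \<and> decoration_ok b p L"

definition grounded_dl_set :: "nat \<Rightarrow> nat \<Rightarrow> nat \<Rightarrow> nat \<Rightarrow> nat \<Rightarrow> nat \<Rightarrow> nat \<Rightarrow> dland set" where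
  "grounded_dl_set b D \<Delta> \<beta> N1 N2 p =
     {L. landscape b L \<and> grounded L \<and> of_type b D \<Delta> \<beta> N1 N2 p L}"

definition is_iso :: "nat \<Rightarrow> (nat \<Rightarrow> nat) \<Rightarrow> dland \<Rightarrow> dland \<Rightarrow> bool" where
  "is_iso b f L1 L2 \<longleftrightarrow> bij_betw f (vg_verts L1) (vg_verts L2) \<and>
     (\<forall>x\<in>vg_verts L1. \<forall>y\<in>vg_verts L1. (x, y) \<in> vg_edges L1 \<longleftrightarrow> (f x, f y) \<in> vg_edges L2) \<and>
     (\<forall>x\<in>vg_verts L1. \<forall>u\<in>vg_verts L1. \<forall>v\<in>vg_verts L1.
        ((u, v) \<in> vg_varord L1 x \<longleftrightarrow> (f u, f v) \<in> vg_varord L2 (f x)) \<and>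
        ((u, v) \<in> vg_clord L1 x \<longleftrightarrow> (f u, f v) \<in> vg_clord L2 (f x))) \<and>
     (\<forall>x\<in>vg_verts L1. \<forall>\<sigma>\<in>assign b (Var L1 x). \<forall>\<tau>\<in>assign b (Var L2 (f x)).
        (\<forall>v\<in>Var L1 x. \<tau> (f v) = \<sigma> v) \<longrightarrow> (\<sigma> \<in> dl_rule L1 x \<longleftrightarrow> \<tau> \<in> dl_rule L2 (f x))) \<and>
     (\<forall>x\<in>vg_verts L1. \<forall>i. (x, i) \<in> dl_fverts L1 \<longleftrightarrow> (f x, i) \<in> dl_fverts L2) \<and>
     (\<forall>x\<in>vg_verts L1. \<forall>y\<in>vg_verts L1. \<forall>i j l.
        ((x, i), (y, j), l) \<in> dl_fedges L1 \<longleftrightarrow> ((f x, i), (f y, j), l) \<in> dl_fedges L2) \<and>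
     (\<forall>x\<in>vg_verts L1. dl_final L2 (f x) = dl_final L1 x \<and> dl_pi L2 (f x) = dl_pi L1 x) \<and>
     (\<forall>u\<in>dl_fverts L1. \<forall>v\<in>Var L1 (fst u). dl_prev L2 (f (fst u), snd u) (f v) = dl_prev L1 u v)"

definition iso_rel :: "nat \<Rightarrow> dland set \<Rightarrow> (dland \<times> dland) set" where
  "iso_rel b S = {(L1, L2). L1 \<in> S \<and> L2 \<in> S \<and> (\<exists>f. is_iso b f L1 L2)}"

end

theory Submission
  imports Defs
begin

lemma binom_term_bound:
  fixes \<Delta> N k :: nat
  assumes "\<Delta> \<ge> 2" "k \<le> N"
  shows "real ((\<Delta>*N) choose k) \<le> (real \<Delta> ^ \<Delta> / real (\<Delta> - 1) ^ (\<Delta> - 1)) ^ N"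
proof -
  define m where "m = \<Delta>*N"
  have km: "k \<le> m" using assms unfolding m_def by (metis le_trans mult_le_mono1 mult_1 one_le_numeral le_trans[OF _ assms(1)] order.trans[OF one_le_numeral assms(1)])
  have "(1 + (\<Delta>-1))^m = (\<Sum>j\<le>m. (m choose j) * 1^j * (\<Delta>-1)^(m-j))"
    using binomial[of 1 "\<Delta>-1" m] by simp
  hence "(m choose k) * (\<Delta>-1)^(m-k) \<le> \<Delta>^m"
    using assms(1) km member_le_sum[of k "{..m}" "\<lambda>j. (m choose j) * 1^j * (\<Delta>-1)^(m-j)"]
    by simp
  moreover have "(\<Delta>-1)^((\<Delta>-1)*N) \<le> (\<Delta>-1)^(m-k)"
    apply (rule power_increasing) using assms unfolding m_def by (auto simp: diff_mult_distrib)
  ultimately have "(m choose k) * (\<Delta>-1)^((\<Delta>-1)*N) \<le> \<Delta>^m"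
    by (meson le_trans mult_le_mono2)
  hence "real (m choose k) * real (\<Delta>-1)^((\<Delta>-1)*N) \<le> real \<Delta>^m"
    by (metis of_nat_le_iff of_nat_mult of_nat_power)
  moreover have pos: "real (\<Delta>-1)^((\<Delta>-1)*N) > 0" using assms by simp
  ultimately have "real (m choose k) \<le> real \<Delta>^m / real (\<Delta>-1)^((\<Delta>-1)*N)"
    by (simp add: field_simps)
  also have "\<dots> = (real \<Delta> ^ \<Delta> / real (\<Delta> - 1) ^ (\<Delta> - 1)) ^ N"
    unfolding m_def by (simp add: power_mult power_divide)
  finally show ?thesis unfolding m_def .
qed


definition lexl :: "nat \<times> nat \<Rightarrow> nat \<times> nat \<Rightarrow> bool" where
  "lexl w u \<longleftrightarrow> snd w < snd u \<or> (snd w = snd u \<and> fst w < fst u)"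

definition pos :: "(nat \<times> nat) set \<Rightarrow> nat \<times> nat \<Rightarrow> nat" where
  "pos F u = card {w\<in>F. lexl w u}"

definition rk :: "nat rel \<Rightarrow> nat \<Rightarrow> nat \<Rightarrow> nat" where
  "rk A x y = card {z. (x, z) \<in> A \<and> z < y}"

lemma pos_lt: assumes "finite F" "u \<in> F" shows "pos F u < card F"
  unfolding pos_def
  by (rule psubset_card_mono) (use assms in \<open>auto simp: lexl_def\<close>)

lemma pos_mono: assumes "finite F" "u' \<in> F" "lexl u' u" shows "pos F u' < pos F u"
  unfolding pos_def
  by (rule psubset_card_mono) (use assms in \<open>auto simp: lexl_def\<close>)

lemma pos_inj: assumes "finite F" "u \<in> F" "u' \<in> F" "pos F u = pos F u'" shows "u = u'"
proof (rule ccontr)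
  assume "u \<noteq> u'"
  hence "lexl u u' \<or> lexl u' u" unfolding lexl_def by (cases u, cases u') auto
  thus False using pos_mono[OF assms(1)] assms by (metis less_irrefl)
qed

lemma pos_local:
  assumes "{w\<in>F1. snd w \<le> snd u} = {w\<in>F2. snd w \<le> snd u}"
  shows "pos F1 u = pos F2 u"
proof -
  have "{w\<in>F1. lexl w u} = {w\<in>F1. snd w \<le> snd u \<and> lexl w u}"
    unfolding lexl_def by auto
  also have "\<dots> = {w\<in>F2. snd w \<le> snd u \<and> lexl w u}"
    using assms by blast
  also have "\<dots> = {w\<in>F2. lexl w u}"
    unfolding lexl_def by auto
  finally have "{w\<in>F1. lexl w u} = {w\<in>F2. lexl w u}" .
  thus ?thesis unfolding pos_def by simp
qed

lemma rk_lt: assumes "finite {z. (x, z) \<in> A}" "(x, y) \<in> A"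
  shows "rk A x y < card {z. (x, z) \<in> A}"
  unfolding rk_def by (rule psubset_card_mono) (use assms in auto)

lemma rk_mono: assumes "finite {z. (x, z) \<in> A}" "(x, y) \<in> A" "y < y'"
  shows "rk A x y < rk A x y'"
  unfolding rk_def by (rule psubset_card_mono) (use assms in auto)

lemma rk_inj: assumes "finite {z. (x, z) \<in> A}" "(x, y) \<in> A" "(x, y') \<in> A" "rk A x y = rk A x y'"
  shows "y = y'"
  using rk_mono[OF assms(1,2)] rk_mono[OF assms(1,3)] assms(4) by (metis less_irrefl nat_neq_iff)

definition forests :: "nat rel \<Rightarrow> (nat \<times> nat \<Rightarrow> nat) \<Rightarrow> nat \<Rightarrow> nat \<Rightarrow>
   ((nat \<times> nat) set \<times> ((nat \<times> nat) \<times> (nat \<times> nat) \<times> nat) set) set" where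
  "forests A lab n N2 = {(F, E). finite F \<and> card F = N2 \<and> fst ` F \<subseteq> {..<n} \<and>
     (\<forall>(u, v, l)\<in>E. u \<in> F \<and> v \<in> F \<and> snd v = Suc (snd u) \<and> (fst u, fst v) \<in> A \<and> l = lab (fst u, fst v)) \<and>
     (\<forall>e\<in>E. \<forall>e'\<in>E. fst (snd e) = fst (snd e') \<longrightarrow> e = e') \<and>
     (\<forall>v\<in>F. 0 < snd v \<longrightarrow> (\<exists>e\<in>E. fst (snd e) = v))}"

definition enc :: "nat rel \<Rightarrow> nat \<Rightarrow> (nat \<times> nat) set \<times> ((nat \<times> nat) \<times> (nat \<times> nat) \<times> nat) set
   \<Rightarrow> nat set \<times> nat set" where
  "enc A \<Delta> FE = ({x. (x, 0) \<in> fst FE},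
     (\<lambda>e. pos (fst FE) (fst e) * \<Delta> + rk A (fst (fst e)) (fst (fst (snd e)))) ` snd FE)"

locale fctx =
  fixes A :: "nat rel" and lab :: "nat \<times> nat \<Rightarrow> nat" and n N2 \<Delta> :: nat
  assumes A_sub: "A \<subseteq> {..<n} \<times> {..<n}"
    and deg: "\<And>x. card {z. (x, z) \<in> A} \<le> \<Delta>"
begin

lemma nb_fin: "finite {z. (x, z) \<in> A}"
  by (rule finite_subset[of _ "{..<n}"]) (use A_sub in auto)

lemma rk_lt_D: "(x, y) \<in> A \<Longrightarrow> rk A x y < \<Delta>"
  using rk_lt[OF nb_fin] deg le_trans by (metis leD leI)

lemma decode:
  assumes f1: "(F1, E1) \<in> forests A lab n N2" and f2: "(F2, E2) \<in> forests A lab n N2"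
    and Z: "snd (enc A \<Delta> (F1, E1)) = snd (enc A \<Delta> (F2, E2))"
    and lev: "{w\<in>F1. snd w \<le> i} = {w\<in>F2. snd w \<le> i}"
    and e: "(u, v, l) \<in> E1" and ui: "snd u = i"
  shows "(u, v, l) \<in> E2"
proof -
  have F1: "finite F1" and F2: "finite F2" using f1 f2 unfolding forests_def by auto
  have e1: "u \<in> F1" "v \<in> F1" "snd v = Suc (snd u)" "(fst u, fst v) \<in> A" "l = lab (fst u, fst v)"
    using f1 e unfolding forests_def by fastforce+
  have uF2: "u \<in> F2" using lev e1(1) ui by blast
  have pe: "pos F1 u = pos F2 u" by (rule pos_local) (use lev ui in simp)
  have "pos F1 u * \<Delta> + rk A (fst u) (fst v) \<in> snd (enc A \<Delta> (F1, E1))"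
    unfolding enc_def using e by force
  hence "pos F2 u * \<Delta> + rk A (fst u) (fst v) \<in> (\<lambda>e. pos F2 (fst e) * \<Delta> + rk A (fst (fst e)) (fst (fst (snd e)))) ` E2"
    using Z pe by (simp only:) (simp add: enc_def)
  then obtain e' where e'E: "e' \<in> E2" and
    eq0: "pos F2 u * \<Delta> + rk A (fst u) (fst v) = pos F2 (fst e') * \<Delta> + rk A (fst (fst e')) (fst (fst (snd e')))"
    by (rule imageE)
  obtain u' v' l' where e'd: "e' = (u', v', l')" by (cases e') auto
  have e': "(u', v', l') \<in> E2" using e'E e'd by simp
  have eq: "pos F2 u' * \<Delta> + rk A (fst u') (fst v') = pos F2 u * \<Delta> + rk A (fst u) (fst v)"
    using eq0 e'd by simp
  have e2: "u' \<in> F2" "v' \<in> F2" "snd v' = Suc (snd u')" "(fst u', fst v') \<in> A" "l' = lab (fst u', fst v')"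
    using f2 e' unfolding forests_def by fastforce+
  have r1: "rk A (fst u) (fst v) < \<Delta>" using rk_lt_D e1(4) .
  have r2: "rk A (fst u') (fst v') < \<Delta>" using rk_lt_D e2(4) .
  have "pos F2 u' = pos F2 u \<and> rk A (fst u') (fst v') = rk A (fst u) (fst v)"
  proof -
    have "(pos F2 u' * \<Delta> + rk A (fst u') (fst v')) div \<Delta> = pos F2 u'"
      using r2 by simp
    moreover have "(pos F2 u * \<Delta> + rk A (fst u) (fst v)) div \<Delta> = pos F2 u"
      using r1 by simp
    moreover have "(pos F2 u' * \<Delta> + rk A (fst u') (fst v')) mod \<Delta> = rk A (fst u') (fst v')"
      using r2 by simp
    moreover have "(pos F2 u * \<Delta> + rk A (fst u) (fst v)) mod \<Delta> = rk A (fst u) (fst v)"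
      using r1 by simp
    ultimately show ?thesis using eq by metis
  qed
  hence uu: "u' = u" and rr: "rk A (fst u) (fst v') = rk A (fst u) (fst v)"
    using pos_inj[OF F2 e2(1) uF2] by auto
  have "fst v' = fst v" using rk_inj[OF nb_fin, of "fst u" "fst v'" "fst v"] e2(4) e1(4) uu rr by simp
  hence "v' = v" using e1(3) e2(3) uu by (simp add: prod_eq_iff)
  thus ?thesis using e' uu e1(5) e2(5) by simp
qed

lemma enc_inj:
  assumes f1: "(F1, E1) \<in> forests A lab n N2" and f2: "(F2, E2) \<in> forests A lab n N2"
    and Z: "enc A \<Delta> (F1, E1) = enc A \<Delta> (F2, E2)"
  shows "F1 = F2 \<and> E1 = E2"
proof -
  have R: "\<And>x. (x, 0) \<in> F1 \<longleftrightarrow> (x, 0) \<in> F2" using Z unfolding enc_def by (auto simp: set_eq_iff)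
  have Zs: "snd (enc A \<Delta> (F1, E1)) = snd (enc A \<Delta> (F2, E2))" using Z by simp
  have Zs': "snd (enc A \<Delta> (F2, E2)) = snd (enc A \<Delta> (F1, E1))" using Z by simp
  have lev: "{w\<in>F1. snd w \<le> i} = {w\<in>F2. snd w \<le> i}" for i
  proof (induction i)
    case 0
    show ?case using R by (auto; metis prod.collapse)
  next
    case (Suc i)
    have step: "v \<in> Fb" if fa: "(Fa, Ea) \<in> forests A lab n N2" and fb: "(Fb, Eb) \<in> forests A lab n N2"
      and Zab: "snd (enc A \<Delta> (Fa, Ea)) = snd (enc A \<Delta> (Fb, Eb))"
      and la: "{w\<in>Fa. snd w \<le> i} = {w\<in>Fb. snd w \<le> i}"
      and v: "v \<in> Fa" "snd v = Suc i" for Fa Ea Fb Eb v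
    proof -
      obtain e where e: "e \<in> Ea" "fst (snd e) = v" using fa v unfolding forests_def by fastforce
      obtain u w l where el: "e = (u, w, l)" by (cases e) auto
      have "snd w = Suc (snd u)" using fa e el unfolding forests_def by fastforce
      hence ui: "snd u = i" using e el v by simp
      have "(u, w, l) \<in> Eb" using decode[OF fa fb Zab la] e el ui by simp
      thus ?thesis using fb e el unfolding forests_def by fastforce
    qed
    show ?case
    proof (intro set_eqI iffI)
      fix v assume v: "v \<in> {w \<in> F1. snd w \<le> Suc i}"
      show "v \<in> {w \<in> F2. snd w \<le> Suc i}"
      proof (cases "snd v \<le> i")
        case True thus ?thesis using v Suc.IH by blast
      next
        case False hence "snd v = Suc i" using v by simp
        thus ?thesis using v step[OF f1 f2 Zs Suc.IH, of v] by simp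
      qed
    next
      fix v assume v: "v \<in> {w \<in> F2. snd w \<le> Suc i}"
      show "v \<in> {w \<in> F1. snd w \<le> Suc i}"
      proof (cases "snd v \<le> i")
        case True thus ?thesis using v Suc.IH by blast
      next
        case False hence "snd v = Suc i" using v by simp
        thus ?thesis using v step[OF f2 f1 Zs' Suc.IH[symmetric], of v] by simp
      qed
    qed
  qed
  have FF: "F1 = F2"
  proof (intro set_eqI)
    fix v show "v \<in> F1 \<longleftrightarrow> v \<in> F2" using lev[of "snd v"] by blast
  qed
  have EE: "E1 = E2"
  proof (intro set_eqI iffI)
    fix e assume "e \<in> E1" thus "e \<in> E2" using decode[OF f1 f2 Zs lev] by (cases e) auto
  next
    fix e assume "e \<in> E2" thus "e \<in> E1" using decode[OF f2 f1 Zs' lev[symmetric]] by (cases e) auto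
  qed
  show ?thesis using FF EE by simp
qed


lemma enc_range:
  assumes f: "(F, E) \<in> forests A lab n N2"
  shows "enc A \<Delta> (F, E) \<in> Pow {..<n} \<times> {Z. Z \<subseteq> {..<\<Delta>*N2} \<and> card Z \<le> N2}"
proof -
  have F: "finite F" "card F = N2" "fst ` F \<subseteq> {..<n}" using f unfolding forests_def by auto
  have Eprop: "\<And>u v l. (u, v, l) \<in> E \<Longrightarrow> u \<in> F \<and> v \<in> F \<and> snd v = Suc (snd u) \<and> (fst u, fst v) \<in> A"
    using f unfolding forests_def by fastforce
  have inj: "\<forall>e\<in>E. \<forall>e'\<in>E. fst (snd e) = fst (snd e') \<longrightarrow> e = e'" using f unfolding forests_def by auto
  have R: "{x. (x, 0) \<in> F} \<subseteq> {..<n}" using F(3) by force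
  have Zsub: "(\<lambda>e. pos F (fst e) * \<Delta> + rk A (fst (fst e)) (fst (fst (snd e)))) ` E \<subseteq> {..<\<Delta>*N2}"
  proof
    fix z assume "z \<in> (\<lambda>e. pos F (fst e) * \<Delta> + rk A (fst (fst e)) (fst (fst (snd e)))) ` E"
    then obtain u v l where e: "(u, v, l) \<in> E" and z: "z = pos F u * \<Delta> + rk A (fst u) (fst v)" by auto
    have p: "pos F u < N2" using pos_lt[OF F(1)] Eprop[OF e] F(2) by auto
    have r: "rk A (fst u) (fst v) < \<Delta>" using rk_lt_D Eprop[OF e] by auto
    have "pos F u * \<Delta> + rk A (fst u) (fst v) < Suc (pos F u) * \<Delta>" using r by simp
    also have "\<dots> \<le> N2 * \<Delta>" using p by (intro mult_le_mono1) simp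
    finally show "z \<in> {..<\<Delta>*N2}" using z by (simp add: mult.commute)
  qed
  have injE: "inj_on (\<lambda>e. fst (snd e)) E" using inj by (auto simp: inj_on_def)
  have imgE: "(\<lambda>e. fst (snd e)) ` E \<subseteq> F" using Eprop by force
  have finE: "finite E" using inj_on_finite[OF injE imgE F(1)] .
  have cE: "card E \<le> N2" using card_inj_on_le[OF injE imgE F(1)] F(2) by simp
  have "card ((\<lambda>e. pos F (fst e) * \<Delta> + rk A (fst (fst e)) (fst (fst (snd e)))) ` E) \<le> N2"
    using card_image_le[OF finE] cE le_trans by blast
  thus ?thesis using R Zsub unfolding enc_def by simp
qed

lemma card_small_subsets:
  "card {Z. Z \<subseteq> {..<m::nat} \<and> card Z \<le> N} \<le> (\<Sum>k\<le>N. m choose k)"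
proof -
  have "{Z. Z \<subseteq> {..<m::nat} \<and> card Z \<le> N} = (\<Union>k\<in>{..N}. {Z. Z \<subseteq> {..<m} \<and> card Z = k})" by auto
  hence "card {Z. Z \<subseteq> {..<m::nat} \<and> card Z \<le> N} \<le> (\<Sum>k\<le>N. card {Z. Z \<subseteq> {..<m} \<and> card Z = k})"
    using card_UN_le[of "{..N}" "\<lambda>k. {Z. Z \<subseteq> {..<m} \<and> card Z = k}"] by simp
  also have "\<dots> = (\<Sum>k\<le>N. m choose k)" using n_subsets[of "{..<m}"] by simp
  finally show ?thesis .
qed

lemma forests_card:
  "finite (forests A lab n N2) \<and> card (forests A lab n N2) \<le> 2 ^ n * (\<Sum>k\<le>N2. (\<Delta>*N2) choose k)"
proof -
  let ?C = "Pow {..<n} \<times> {Z. Z \<subseteq> {..<\<Delta>*N2} \<and> card Z \<le> N2}"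
  have inj: "inj_on (enc A \<Delta>) (forests A lab n N2)"
  proof (rule inj_onI)
    fix x y assume "x \<in> forests A lab n N2" "y \<in> forests A lab n N2" "enc A \<Delta> x = enc A \<Delta> y"
    thus "x = y" using enc_inj by (cases x, cases y) blast
  qed
  have img: "enc A \<Delta> ` forests A lab n N2 \<subseteq> ?C"
  proof
    fix c assume "c \<in> enc A \<Delta> ` forests A lab n N2"
    then obtain x where x: "x \<in> forests A lab n N2" "c = enc A \<Delta> x" by blast
    obtain F E where "x = (F, E)" by (cases x)
    thus "c \<in> ?C" using enc_range x by simp
  qed
  have finC: "finite ?C" by auto
  have "card (forests A lab n N2) \<le> card ?C" using card_inj_on_le[OF inj img finC] .
  also have "\<dots> = 2 ^ n * card {Z. Z \<subseteq> {..<\<Delta>*N2} \<and> card Z \<le> N2}"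
    by (simp add: card_cartesian_product card_Pow)
  also have "\<dots> \<le> 2 ^ n * (\<Sum>k\<le>N2. (\<Delta>*N2) choose k)"
    using card_small_subsets by simp
  finally show ?thesis using inj_on_finite[OF inj img finC] by simp
qed

end


lemma pl_vg: "pseudo_landscape b L \<Longrightarrow> variable_graph L"
  unfolding pseudo_landscape_def by (elim conjE) assumption
lemma pl_rule: "pseudo_landscape b L \<Longrightarrow> (\<forall>x\<in>vg_verts L. dl_rule L x \<subseteq> assign b (Var L x))"
  unfolding pseudo_landscape_def by (elim conjE) assumption
lemma pl_fv: "pseudo_landscape b L \<Longrightarrow> dl_fverts L \<subseteq> vg_verts L \<times> UNIV"
  unfolding pseudo_landscape_def by (elim conjE) assumption
lemma pl_fe: "pseudo_landscape b L \<Longrightarrow> (\<forall>(u, v, l)\<in>dl_fedges L. u \<in> dl_fverts L \<and> v \<in> dl_fverts L \<and> (u, v, l) \<in> canvasE L)"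
  unfolding pseudo_landscape_def by (elim conjE) assumption
lemma pl_indeg: "pseudo_landscape b L \<Longrightarrow> (\<forall>v\<in>dl_fverts L. card {e\<in>dl_fedges L. fst (snd e) = v} \<le> 1)"
  unfolding pseudo_landscape_def by (elim conjE) assumption
lemma vg_E: "variable_graph L \<Longrightarrow> vg_edges L \<subseteq> vg_verts L \<times> vg_verts L"
  unfolding variable_graph_def by (elim conjE) assumption

lemma iso_bij: "is_iso b f L1 L2 \<Longrightarrow> bij_betw f (vg_verts L1) (vg_verts L2)"
  unfolding is_iso_def by (elim conjE) assumption
lemma iso_E: "is_iso b f L1 L2 \<Longrightarrow> \<forall>x\<in>vg_verts L1. \<forall>y\<in>vg_verts L1. (x, y) \<in> vg_edges L1 \<longleftrightarrow> (f x, f y) \<in> vg_edges L2"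
  unfolding is_iso_def by (elim conjE) assumption
lemma iso_O: "is_iso b f L1 L2 \<Longrightarrow> (\<forall>x\<in>vg_verts L1. \<forall>u\<in>vg_verts L1. \<forall>v\<in>vg_verts L1.
        ((u, v) \<in> vg_varord L1 x \<longleftrightarrow> (f u, f v) \<in> vg_varord L2 (f x)) \<and>
        ((u, v) \<in> vg_clord L1 x \<longleftrightarrow> (f u, f v) \<in> vg_clord L2 (f x)))"
  unfolding is_iso_def by (elim conjE) assumption
lemma iso_R: "is_iso b f L1 L2 \<Longrightarrow> (\<forall>x\<in>vg_verts L1. \<forall>\<sigma>\<in>assign b (Var L1 x). \<forall>\<tau>\<in>assign b (Var L2 (f x)).
        (\<forall>v\<in>Var L1 x. \<tau> (f v) = \<sigma> v) \<longrightarrow> (\<sigma> \<in> dl_rule L1 x \<longleftrightarrow> \<tau> \<in> dl_rule L2 (f x)))"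
  unfolding is_iso_def by (elim conjE) assumption
lemma iso_FV: "is_iso b f L1 L2 \<Longrightarrow> (\<forall>x\<in>vg_verts L1. \<forall>i. (x, i) \<in> dl_fverts L1 \<longleftrightarrow> (f x, i) \<in> dl_fverts L2)"
  unfolding is_iso_def by (elim conjE) assumption
lemma iso_FE: "is_iso b f L1 L2 \<Longrightarrow> (\<forall>x\<in>vg_verts L1. \<forall>y\<in>vg_verts L1. \<forall>i j l.
        ((x, i), (y, j), l) \<in> dl_fedges L1 \<longleftrightarrow> ((f x, i), (f y, j), l) \<in> dl_fedges L2)"
  unfolding is_iso_def by (elim conjE) assumption
lemma iso_FP: "is_iso b f L1 L2 \<Longrightarrow> (\<forall>x\<in>vg_verts L1. dl_final L2 (f x) = dl_final L1 x \<and> dl_pi L2 (f x) = dl_pi L1 x)"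
  unfolding is_iso_def by (elim conjE) assumption
lemma iso_P: "is_iso b f L1 L2 \<Longrightarrow> (\<forall>u\<in>dl_fverts L1. \<forall>v\<in>Var L1 (fst u). dl_prev L2 (f (fst u), snd u) (f v) = dl_prev L1 u v)"
  unfolding is_iso_def by (elim conjE) assumption

lemma iso_Var:
  assumes iso: "is_iso b f L1 L2" and vg1: "variable_graph L1" and vg2: "variable_graph L2"
    and x: "x \<in> vg_verts L1"
  shows "Var L2 (f x) = f ` Var L1 x"
proof
  have bij: "bij_betw f (vg_verts L1) (vg_verts L2)" and
    E: "\<forall>x\<in>vg_verts L1. \<forall>y\<in>vg_verts L1. (x, y) \<in> vg_edges L1 \<longleftrightarrow> (f x, f y) \<in> vg_edges L2"
    using iso_bij[OF iso] iso_E[OF iso] by auto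
  have s1: "vg_edges L1 \<subseteq> vg_verts L1 \<times> vg_verts L1" and s2: "vg_edges L2 \<subseteq> vg_verts L2 \<times> vg_verts L2"
    using vg_E[OF vg1] vg_E[OF vg2] by auto
  show "f ` Var L1 x \<subseteq> Var L2 (f x)"
  proof
    fix z assume "z \<in> f ` Var L1 x"
    then obtain y where y: "(x, y) \<in> vg_edges L1" "z = f y" unfolding Var_def by auto
    have "y \<in> vg_verts L1" using y s1 by auto
    thus "z \<in> Var L2 (f x)" using E x y unfolding Var_def by auto
  qed
  show "Var L2 (f x) \<subseteq> f ` Var L1 x"
  proof
    fix z assume "z \<in> Var L2 (f x)"
    hence z: "(f x, z) \<in> vg_edges L2" unfolding Var_def by auto
    hence "z \<in> vg_verts L2" using s2 by auto
    then obtain y where y: "y \<in> vg_verts L1" "z = f y" using bij unfolding bij_betw_def by auto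
    thus "z \<in> f ` Var L1 x" using E x z unfolding Var_def by auto
  qed
qed

lemma iso_comp:
  assumes i1: "is_iso b f L1 L2" and i2: "is_iso b g L2 L3"
    and p1: "pseudo_landscape b L1" and p2: "pseudo_landscape b L2" and p3: "pseudo_landscape b L3"
  shows "is_iso b (g \<circ> f) L1 L3"
proof -
  note vg1 = pl_vg[OF p1] and vg2 = pl_vg[OF p2] and vg3 = pl_vg[OF p3]
  note bf = iso_bij[OF i1] and bg = iso_bij[OF i2]
  have fV: "\<And>x. x \<in> vg_verts L1 \<Longrightarrow> f x \<in> vg_verts L2" by (rule bij_betw_apply[OF bf])
  have fv1: "dl_fverts L1 \<subseteq> vg_verts L1 \<times> UNIV" using pl_fv[OF p1] .
  have rules: "(\<sigma> \<in> dl_rule L1 x \<longleftrightarrow> \<tau> \<in> dl_rule L3 (g (f x)))"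
    if x: "x \<in> vg_verts L1" and s: "\<sigma> \<in> assign b (Var L1 x)" and t: "\<tau> \<in> assign b (Var L3 ((g \<circ> f) x))"
      and st: "\<forall>v\<in>Var L1 x. \<tau> ((g \<circ> f) v) = \<sigma> v" for x \<sigma> \<tau>
  proof -
    have V2: "Var L2 (f x) = f ` Var L1 x" using iso_Var[OF i1 vg1 vg2 x] .
    have V1sub: "Var L1 x \<subseteq> vg_verts L1" using vg_E[OF vg1] unfolding Var_def by auto
    define \<rho> where "\<rho> = restrict (\<sigma> \<circ> inv_into (vg_verts L1) f) (Var L2 (f x))"
    have invf: "\<And>v. v \<in> Var L1 x \<Longrightarrow> inv_into (vg_verts L1) f (f v) = v"
      using bf V1sub by (meson bij_betw_inv_into_left subsetD)
    have rv: "\<And>v. v \<in> Var L1 x \<Longrightarrow> \<rho> (f v) = \<sigma> v" unfolding \<rho>_def V2 using invf by auto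
    have r: "\<rho> \<in> assign b (Var L2 (f x))"
      using s unfolding assign_def \<rho>_def V2 by (auto simp: invf)
    have c1: "\<sigma> \<in> dl_rule L1 x \<longleftrightarrow> \<rho> \<in> dl_rule L2 (f x)"
      using iso_R[OF i1, rule_format, OF x s r] rv by blast
    have c2: "\<rho> \<in> dl_rule L2 (f x) \<longleftrightarrow> \<tau> \<in> dl_rule L3 (g (f x))"
    proof -
      have "\<forall>w\<in>Var L2 (f x). \<tau> (g w) = \<rho> w" using st rv unfolding V2 by auto
      moreover have t': "\<tau> \<in> assign b (Var L3 (g (f x)))" using t by simp
      ultimately show ?thesis using iso_R[OF i2, rule_format, OF fV[OF x] r t'] by blast
    qed
    show ?thesis using c1 c2 by simp
  qed
  show ?thesis
    unfolding is_iso_def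
  proof (intro conjI)
    show "bij_betw (g \<circ> f) (vg_verts L1) (vg_verts L3)" using bij_betw_trans[OF bf bg] .
    show "\<forall>x\<in>vg_verts L1. \<forall>y\<in>vg_verts L1. ((x, y) \<in> vg_edges L1) = (((g \<circ> f) x, (g \<circ> f) y) \<in> vg_edges L3)"
      using iso_E[OF i1] iso_E[OF i2] fV by simp
    show "\<forall>x\<in>vg_verts L1. \<forall>u\<in>vg_verts L1. \<forall>v\<in>vg_verts L1.
        ((u, v) \<in> vg_varord L1 x) = (((g \<circ> f) u, (g \<circ> f) v) \<in> vg_varord L3 ((g \<circ> f) x)) \<and>
        ((u, v) \<in> vg_clord L1 x) = (((g \<circ> f) u, (g \<circ> f) v) \<in> vg_clord L3 ((g \<circ> f) x))"
      using iso_O[OF i1] iso_O[OF i2] fV by simp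
    show "\<forall>x\<in>vg_verts L1. \<forall>\<sigma>\<in>assign b (Var L1 x). \<forall>\<tau>\<in>assign b (Var L3 ((g \<circ> f) x)).
        (\<forall>v\<in>Var L1 x. \<tau> ((g \<circ> f) v) = \<sigma> v) \<longrightarrow> (\<sigma> \<in> dl_rule L1 x) = (\<tau> \<in> dl_rule L3 ((g \<circ> f) x))"
      using rules by simp
    show "\<forall>x\<in>vg_verts L1. \<forall>i. ((x, i) \<in> dl_fverts L1) = (((g \<circ> f) x, i) \<in> dl_fverts L3)"
      using iso_FV[OF i1] iso_FV[OF i2] fV by simp
    show "\<forall>x\<in>vg_verts L1. \<forall>y\<in>vg_verts L1. \<forall>i j l.
        (((x, i), (y, j), l) \<in> dl_fedges L1) = ((((g \<circ> f) x, i), ((g \<circ> f) y, j), l) \<in> dl_fedges L3)"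
      using iso_FE[OF i1] iso_FE[OF i2] fV by simp
    show "\<forall>x\<in>vg_verts L1. dl_final L3 ((g \<circ> f) x) = dl_final L1 x \<and> dl_pi L3 ((g \<circ> f) x) = dl_pi L1 x"
      using iso_FP[OF i1] iso_FP[OF i2] fV by simp
    show "\<forall>u\<in>dl_fverts L1. \<forall>v\<in>Var L1 (fst u). dl_prev L3 ((g \<circ> f) (fst u), snd u) ((g \<circ> f) v) = dl_prev L1 u v"
    proof (intro ballI)
      fix u v assume u: "u \<in> dl_fverts L1" and v: "v \<in> Var L1 (fst u)"
      have x: "fst u \<in> vg_verts L1" using u fv1 by auto
      have u2: "(f (fst u), snd u) \<in> dl_fverts L2" using iso_FV[OF i1] x u by (metis prod.collapse)
      have v2: "f v \<in> Var L2 (f (fst u))" using iso_Var[OF i1 vg1 vg2 x] v by simp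
      have "dl_prev L3 (g (f (fst u)), snd u) (g (f v)) = dl_prev L2 (f (fst u), snd u) (f v)"
        using iso_P[OF i2] u2 v2 by fastforce
      also have "\<dots> = dl_prev L1 u v" using iso_P[OF i1] u v by fastforce
      finally show "dl_prev L3 ((g \<circ> f) (fst u), snd u) ((g \<circ> f) v) = dl_prev L1 u v" by simp
    qed
  qed
qed


lemma var_transport:
  assumes bij: "bij_betw f (vg_verts L1) (vg_verts L2)"
    and E: "\<forall>x\<in>vg_verts L1. \<forall>y\<in>vg_verts L1. (x, y) \<in> vg_edges L1 \<longleftrightarrow> (f x, f y) \<in> vg_edges L2"
    and s1: "vg_edges L1 \<subseteq> vg_verts L1 \<times> vg_verts L1" and s2: "vg_edges L2 \<subseteq> vg_verts L2 \<times> vg_verts L2"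
    and x: "x \<in> vg_verts L1"
  shows "Var L2 (f x) = f ` Var L1 x"
proof
  show "f ` Var L1 x \<subseteq> Var L2 (f x)"
  proof
    fix z assume "z \<in> f ` Var L1 x"
    then obtain y where y: "(x, y) \<in> vg_edges L1" "z = f y" unfolding Var_def by blast
    have "y \<in> vg_verts L1" using y s1 by blast
    thus "z \<in> Var L2 (f x)" using E x y unfolding Var_def by blast
  qed
  show "Var L2 (f x) \<subseteq> f ` Var L1 x"
  proof
    fix z assume "z \<in> Var L2 (f x)"
    hence z: "(f x, z) \<in> vg_edges L2" unfolding Var_def by blast
    hence "z \<in> vg_verts L2" using s2 by blast
    then obtain y where y: "y \<in> vg_verts L1" "z = f y" using bij unfolding bij_betw_def by blast
    thus "z \<in> f ` Var L1 x" using E x z unfolding Var_def by blast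
  qed
qed

definition hL :: "dland \<Rightarrow> nat \<Rightarrow> nat" where
  "hL L = (SOME h. bij_betw h (vg_verts L) {..<card (vg_verts L)})"

lemma hL_bij: assumes "finite (vg_verts L)" shows "bij_betw (hL L) (vg_verts L) {..<card (vg_verts L)}"
proof -
  obtain h where "bij_betw h (vg_verts L) {0..<card (vg_verts L)}" using ex_bij_betw_finite_nat[OF assms] by blast
  hence "bij_betw h (vg_verts L) {..<card (vg_verts L)}" by (simp add: atLeast0LessThan)
  thus ?thesis unfolding hL_def by (metis (mono_tags, lifting) someI_ex)
qed

definition trel :: "(nat \<Rightarrow> nat) \<Rightarrow> nat set \<Rightarrow> nat rel \<Rightarrow> nat rel" where
  "trel h V r = map_prod h h ` (r \<inter> V \<times> V)"

lemma trel_iff: assumes "inj_on h V" "x \<in> V" "y \<in> V"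
  shows "(h x, h y) \<in> trel h V r \<longleftrightarrow> (x, y) \<in> r"
proof
  assume "(h x, h y) \<in> trel h V r"
  then obtain x' y' where "(x', y') \<in> r" "x' \<in> V" "y' \<in> V" "h x = h x'" "h y = h y'"
    unfolding trel_def by auto
  thus "(x, y) \<in> r" using assms inj_onD by metis
next
  assume "(x, y) \<in> r" thus "(h x, h y) \<in> trel h V r" unfolding trel_def using assms by force
qed

definition tasg :: "(nat \<Rightarrow> nat) \<Rightarrow> nat set \<Rightarrow> nat set \<Rightarrow> (nat \<Rightarrow> nat) \<Rightarrow> (nat \<Rightarrow> nat)" where
  "tasg h V W \<sigma> = restrict (\<sigma> \<circ> inv_into V h) (h ` W)"

lemma tasg_eval: assumes "inj_on h V" "W \<subseteq> V" "w \<in> W" shows "tasg h V W \<sigma> (h w) = \<sigma> w"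
  unfolding tasg_def using assms by (auto simp: inv_into_f_f subsetD)

lemma tasg_inj: assumes "inj_on h V" "W \<subseteq> V" "\<sigma> \<in> assign b W" "\<sigma>' \<in> assign b W"
    "tasg h V W \<sigma> = tasg h V W \<sigma>'"
  shows "\<sigma> = \<sigma>'"
proof
  fix w show "\<sigma> w = \<sigma>' w"
  proof (cases "w \<in> W")
    case True
    thus ?thesis using tasg_eval[OF assms(1,2) True, of \<sigma>] tasg_eval[OF assms(1,2) True, of \<sigma>'] assms(5) by simp
  next
    case False
    thus ?thesis using assms(3,4) unfolding assign_def by (auto simp: PiE_def extensional_def)
  qed
qed

definition te :: "(nat \<Rightarrow> nat) \<Rightarrow> (nat \<times> nat) \<times> (nat \<times> nat) \<times> nat \<Rightarrow> (nat \<times> nat) \<times> (nat \<times> nat) \<times> nat" where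
  "te h e = ((h (fst (fst e)), snd (fst e)), (h (fst (fst (snd e))), snd (fst (snd e))), snd (snd e))"

lemma tfv_iff: assumes "inj_on h V" "F \<subseteq> V \<times> UNIV" "x \<in> V"
  shows "(h x, i) \<in> map_prod h id ` F \<longleftrightarrow> (x, i) \<in> F"
proof
  assume "(h x, i) \<in> map_prod h id ` F"
  then obtain x' where "(x', i) \<in> F" "h x = h x'" by auto
  moreover hence "x' \<in> V" using assms(2) by auto
  ultimately show "(x, i) \<in> F" using assms inj_onD by metis
qed force

lemma te_iff: assumes "inj_on h V" "\<forall>e\<in>E. fst (fst e) \<in> V \<and> fst (fst (snd e)) \<in> V" "x \<in> V" "y \<in> V"
  shows "((h x, i), (h y, j), l) \<in> te h ` E \<longleftrightarrow> ((x, i), (y, j), l) \<in> E"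
proof
  assume "((h x, i), (h y, j), l) \<in> te h ` E"
  then obtain x' y' where e: "((x', i), (y', j), l) \<in> E" "h x = h x'" "h y = h y'"
    unfolding te_def by force
  moreover have "x' \<in> V" "y' \<in> V" using assms(2) e(1) by force+
  ultimately show "((x, i), (y, j), l) \<in> E" using assms inj_onD by metis
next
  assume "((x, i), (y, j), l) \<in> E" thus "((h x, i), (h y, j), l) \<in> te h ` E"
    unfolding te_def by force
qed

definition acode :: "nat \<Rightarrow> dland \<Rightarrow> (nat \<Rightarrow> nat) \<Rightarrow> _" where
  "acode b L h = (let V = vg_verts L; n = card V; h' = inv_into V h in
     (n, trel h V (vg_edges L),
      restrict (\<lambda>i. trel h V (vg_varord L (h' i))) {..<n},
      restrict (\<lambda>i. trel h V (vg_clord L (h' i))) {..<n},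
      restrict (\<lambda>i. tasg h V (Var L (h' i)) ` dl_rule L (h' i)) {..<n},
      restrict (\<lambda>i. dl_final L (h' i)) {..<n},
      restrict (\<lambda>i. dl_pi L (h' i)) {..<n},
      trel h V (relE L),
      restrict (\<lambda>(i, j). rel_label L (h' i) (h' j)) ({..<n} \<times> {..<n}),
      restrict (\<lambda>i. tasg h V (Var L (h' i)) ` Rc b L (h' i)) {..<n}))"

definition bcode :: "dland \<Rightarrow> (nat \<Rightarrow> nat) \<Rightarrow> _" where
  "bcode L h = (let V = vg_verts L; h' = inv_into V h; FV = map_prod h id ` dl_fverts L in
     (FV, te h ` dl_fedges L,
      restrict (\<lambda>u. tasg h V (Var L (h' (fst u))) (dl_prev L (h' (fst u), snd u))) FV))"


lemma restrict_eqD2: "restrict F A = restrict G B \<Longrightarrow> x \<in> A \<Longrightarrow> x \<in> B \<Longrightarrow> F x = G x"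
  by (metis restrict_apply')

lemma restrict_eqD: "restrict F A = restrict G A \<Longrightarrow> x \<in> A \<Longrightarrow> F x = G x"
  by (metis restrict_apply')

lemma code_iso:
  assumes p1: "pseudo_landscape b L1" and p2: "pseudo_landscape b L2"
    and b1: "bij_betw h1 (vg_verts L1) {..<card (vg_verts L1)}"
    and b2: "bij_betw h2 (vg_verts L2) {..<card (vg_verts L2)}"
    and eqA: "acode b L1 h1 = acode b L2 h2" and eqB: "bcode L1 h1 = bcode L2 h2"
  shows "is_iso b (inv_into (vg_verts L2) h2 \<circ> h1) L1 L2"
proof -
  define V1 where "V1 = vg_verts L1"
  define V2 where "V2 = vg_verts L2"
  define h1' where "h1' = inv_into V1 h1"
  define h2' where "h2' = inv_into V2 h2"
  define n where "n = card V1"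
  define f where "f = h2' \<circ> h1"
  have A: "card V1 = card V2 \<and> trel h1 V1 (vg_edges L1) = trel h2 V2 (vg_edges L2) \<and>
      restrict (\<lambda>i. trel h1 V1 (vg_varord L1 (h1' i))) {..<n} = restrict (\<lambda>i. trel h2 V2 (vg_varord L2 (h2' i))) {..<n} \<and>
      restrict (\<lambda>i. trel h1 V1 (vg_clord L1 (h1' i))) {..<n} = restrict (\<lambda>i. trel h2 V2 (vg_clord L2 (h2' i))) {..<n} \<and>
      restrict (\<lambda>i. tasg h1 V1 (Var L1 (h1' i)) ` dl_rule L1 (h1' i)) {..<n} = restrict (\<lambda>i. tasg h2 V2 (Var L2 (h2' i)) ` dl_rule L2 (h2' i)) {..<n} \<and>
      restrict (\<lambda>i. dl_final L1 (h1' i)) {..<n} = restrict (\<lambda>i. dl_final L2 (h2' i)) {..<n} \<and>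
      restrict (\<lambda>i. dl_pi L1 (h1' i)) {..<n} = restrict (\<lambda>i. dl_pi L2 (h2' i)) {..<n}"
    using eqA unfolding acode_def Let_def V1_def V2_def h1'_def h2'_def n_def
    by (simp only: prod.inject) (metis (no_types))
  have B: "map_prod h1 id ` dl_fverts L1 = map_prod h2 id ` dl_fverts L2 \<and>
      te h1 ` dl_fedges L1 = te h2 ` dl_fedges L2 \<and>
      restrict (\<lambda>u. tasg h1 V1 (Var L1 (h1' (fst u))) (dl_prev L1 (h1' (fst u), snd u))) (map_prod h1 id ` dl_fverts L1)
      = restrict (\<lambda>u. tasg h2 V2 (Var L2 (h2' (fst u))) (dl_prev L2 (h2' (fst u), snd u))) (map_prod h2 id ` dl_fverts L2)"
    using eqB unfolding bcode_def Let_def V1_def V2_def h1'_def h2'_def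
    by (simp only: prod.inject) (metis (no_types))
  have bb1: "bij_betw h1 V1 {..<n}" using b1 unfolding V1_def n_def .
  have bb2: "bij_betw h2 V2 {..<n}" using b2 A unfolding V2_def n_def V1_def by simp
  have i1: "inj_on h1 V1" and i2: "inj_on h2 V2" using bb1 bb2 bij_betw_def by blast+
  have bh2': "bij_betw h2' {..<n} V2" unfolding h2'_def by (rule bij_betw_inv_into[OF bb2])
  have bf: "bij_betw f V1 V2" unfolding f_def by (rule bij_betw_trans[OF bb1 bh2'])
  have h1V: "\<And>x. x \<in> V1 \<Longrightarrow> h1 x < n" using bb1 bij_betw_apply by fastforce
  have fV: "\<And>x. x \<in> V1 \<Longrightarrow> f x \<in> V2" using bf bij_betw_apply by fastforce
  have h2f: "\<And>x. x \<in> V1 \<Longrightarrow> h2 (f x) = h1 x"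
    unfolding f_def h2'_def using bb2 h1V by (simp add: bij_betw_inv_into_right)
  have h1'h1: "\<And>x. x \<in> V1 \<Longrightarrow> h1' (h1 x) = x" unfolding h1'_def using i1 by (simp add: inv_into_f_f)
  have h2'h1: "\<And>x. x \<in> V1 \<Longrightarrow> h2' (h1 x) = f x" unfolding f_def by simp
  have vg1: "variable_graph L1" and vg2: "variable_graph L2" using pl_vg[OF p1] pl_vg[OF p2] by blast+
  have s1: "vg_edges L1 \<subseteq> V1 \<times> V1" and s2: "vg_edges L2 \<subseteq> V2 \<times> V2"
    using vg_E[OF vg1] vg_E[OF vg2] unfolding V1_def V2_def by blast+
  have cE: "\<forall>x\<in>V1. \<forall>y\<in>V1. (x, y) \<in> vg_edges L1 \<longleftrightarrow> (f x, f y) \<in> vg_edges L2"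
  proof (intro ballI)
    fix x y assume x: "x \<in> V1" and y: "y \<in> V1"
    have "(x, y) \<in> vg_edges L1 \<longleftrightarrow> (h1 x, h1 y) \<in> trel h1 V1 (vg_edges L1)" using trel_iff[OF i1 x y] by simp
    also have "\<dots> \<longleftrightarrow> (h2 (f x), h2 (f y)) \<in> trel h2 V2 (vg_edges L2)" using A h2f x y by simp
    also have "\<dots> \<longleftrightarrow> (f x, f y) \<in> vg_edges L2" using trel_iff[OF i2 fV[OF x] fV[OF y]] by simp
    finally show "(x, y) \<in> vg_edges L1 \<longleftrightarrow> (f x, f y) \<in> vg_edges L2" .
  qed
  have VarT: "\<And>x. x \<in> V1 \<Longrightarrow> Var L2 (f x) = f ` Var L1 x"
    using var_transport[of f L1 L2] bf cE s1 s2 unfolding V1_def V2_def by blast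
  have Var1sub: "\<And>x. Var L1 x \<subseteq> V1" using s1 unfolding Var_def by blast
  have Var2sub: "\<And>x. Var L2 x \<subseteq> V2" using s2 unfolding Var_def by blast
  have cO: "\<forall>x\<in>V1. \<forall>u\<in>V1. \<forall>v\<in>V1.
        ((u, v) \<in> vg_varord L1 x \<longleftrightarrow> (f u, f v) \<in> vg_varord L2 (f x)) \<and>
        ((u, v) \<in> vg_clord L1 x \<longleftrightarrow> (f u, f v) \<in> vg_clord L2 (f x))"
  proof (intro ballI conjI)
    fix x u v assume x: "x \<in> V1" and u: "u \<in> V1" and v: "v \<in> V1"
    have eo: "trel h1 V1 (vg_varord L1 x) = trel h2 V2 (vg_varord L2 (f x))"
      using restrict_eqD[OF conjunct1[OF conjunct2[OF conjunct2[OF A]]], of "h1 x"] h1V[OF x] h1'h1[OF x] h2'h1[OF x] by simp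
    have ec: "trel h1 V1 (vg_clord L1 x) = trel h2 V2 (vg_clord L2 (f x))"
      using restrict_eqD[OF conjunct1[OF conjunct2[OF conjunct2[OF conjunct2[OF A]]]], of "h1 x"] h1V[OF x] h1'h1[OF x] h2'h1[OF x] by simp
    show "(u, v) \<in> vg_varord L1 x \<longleftrightarrow> (f u, f v) \<in> vg_varord L2 (f x)"
      using trel_iff[OF i1 u v, of "vg_varord L1 x"] trel_iff[OF i2 fV[OF u] fV[OF v], of "vg_varord L2 (f x)"] eo h2f u v by simp
    show "(u, v) \<in> vg_clord L1 x \<longleftrightarrow> (f u, f v) \<in> vg_clord L2 (f x)"
      using trel_iff[OF i1 u v, of "vg_clord L1 x"] trel_iff[OF i2 fV[OF u] fV[OF v], of "vg_clord L2 (f x)"] ec h2f u v by simp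
  qed
  have rl1: "\<forall>x\<in>V1. dl_rule L1 x \<subseteq> assign b (Var L1 x)" using pl_rule[OF p1] unfolding V1_def .
  have rl2: "\<forall>x\<in>V2. dl_rule L2 x \<subseteq> assign b (Var L2 x)" using pl_rule[OF p2] unfolding V2_def .
  have cR: "\<forall>x\<in>V1. \<forall>\<sigma>\<in>assign b (Var L1 x). \<forall>\<tau>\<in>assign b (Var L2 (f x)).
        (\<forall>v\<in>Var L1 x. \<tau> (f v) = \<sigma> v) \<longrightarrow> (\<sigma> \<in> dl_rule L1 x \<longleftrightarrow> \<tau> \<in> dl_rule L2 (f x))"
  proof (intro ballI impI)
    fix x \<sigma> \<tau> assume x: "x \<in> V1" and s: "\<sigma> \<in> assign b (Var L1 x)" and t: "\<tau> \<in> assign b (Var L2 (f x))"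
      and st: "\<forall>v\<in>Var L1 x. \<tau> (f v) = \<sigma> v"
    have er: "tasg h1 V1 (Var L1 x) ` dl_rule L1 x = tasg h2 V2 (Var L2 (f x)) ` dl_rule L2 (f x)"
      using restrict_eqD[OF conjunct1[OF conjunct2[OF conjunct2[OF conjunct2[OF conjunct2[OF A]]]]], of "h1 x"] h1V[OF x] h1'h1[OF x] h2'h1[OF x] by simp
    have img: "h2 ` Var L2 (f x) = h1 ` Var L1 x"
    proof -
      have "h2 ` Var L2 (f x) = (\<lambda>v. h2 (f v)) ` Var L1 x" using VarT[OF x] by (simp add: image_image)
      also have "\<dots> = h1 ` Var L1 x" using h2f Var1sub by (intro image_cong) (auto simp: subsetD)
      finally show ?thesis .
    qed
    have same: "tasg h1 V1 (Var L1 x) \<sigma> = tasg h2 V2 (Var L2 (f x)) \<tau>"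
    proof
      fix j show "tasg h1 V1 (Var L1 x) \<sigma> j = tasg h2 V2 (Var L2 (f x)) \<tau> j"
      proof (cases "j \<in> h1 ` Var L1 x")
        case True
        then obtain v where v: "v \<in> Var L1 x" "j = h1 v" by blast
        have fv: "f v \<in> Var L2 (f x)" using VarT[OF x] v by blast
        have "tasg h1 V1 (Var L1 x) \<sigma> j = \<sigma> v" using tasg_eval[OF i1 Var1sub v(1)] v by simp
        moreover have "tasg h2 V2 (Var L2 (f x)) \<tau> j = \<tau> (f v)"
          using tasg_eval[OF i2 Var2sub fv] v h2f Var1sub by (metis subsetD)
        ultimately show ?thesis using st v by simp
      next
        case False
        thus ?thesis unfolding tasg_def using img by simp
      qed
    qed
    show "\<sigma> \<in> dl_rule L1 x \<longleftrightarrow> \<tau> \<in> dl_rule L2 (f x)"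
    proof
      assume "\<sigma> \<in> dl_rule L1 x"
      hence "tasg h2 V2 (Var L2 (f x)) \<tau> \<in> tasg h2 V2 (Var L2 (f x)) ` dl_rule L2 (f x)"
        using er same by (metis imageI)
      then obtain \<tau>' where t': "\<tau>' \<in> dl_rule L2 (f x)" "tasg h2 V2 (Var L2 (f x)) \<tau> = tasg h2 V2 (Var L2 (f x)) \<tau>'"
        by blast
      have "\<tau>' \<in> assign b (Var L2 (f x))" using rl2 fV[OF x] t'(1) by blast
      hence "\<tau> = \<tau>'" using tasg_inj[OF i2 Var2sub t] t'(2) by blast
      thus "\<tau> \<in> dl_rule L2 (f x)" using t' by simp
    next
      assume "\<tau> \<in> dl_rule L2 (f x)"
      hence "tasg h1 V1 (Var L1 x) \<sigma> \<in> tasg h1 V1 (Var L1 x) ` dl_rule L1 x"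
        using er same by (metis imageI)
      then obtain \<sigma>' where s': "\<sigma>' \<in> dl_rule L1 x" "tasg h1 V1 (Var L1 x) \<sigma> = tasg h1 V1 (Var L1 x) \<sigma>'"
        by blast
      have "\<sigma>' \<in> assign b (Var L1 x)" using rl1 x s'(1) by blast
      hence "\<sigma> = \<sigma>'" using tasg_inj[OF i1 Var1sub s] s'(2) by blast
      thus "\<sigma> \<in> dl_rule L1 x" using s' by simp
    qed
  qed
  have fv1: "dl_fverts L1 \<subseteq> V1 \<times> UNIV" and fv2: "dl_fverts L2 \<subseteq> V2 \<times> UNIV"
    using pl_fv[OF p1] pl_fv[OF p2] unfolding V1_def V2_def by blast+
  have cFV: "\<forall>x\<in>V1. \<forall>i. (x, i) \<in> dl_fverts L1 \<longleftrightarrow> (f x, i) \<in> dl_fverts L2"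
  proof (intro ballI allI)
    fix x i assume x: "x \<in> V1"
    show "(x, i) \<in> dl_fverts L1 \<longleftrightarrow> (f x, i) \<in> dl_fverts L2"
      using tfv_iff[OF i1 fv1 x, of i] tfv_iff[OF i2 fv2 fV[OF x], of i] h2f[OF x] B by simp
  qed
  have fe1: "\<forall>e\<in>dl_fedges L1. fst (fst e) \<in> V1 \<and> fst (fst (snd e)) \<in> V1"
    using pl_fe[OF p1] fv1 by fastforce
  have fe2: "\<forall>e\<in>dl_fedges L2. fst (fst e) \<in> V2 \<and> fst (fst (snd e)) \<in> V2"
    using pl_fe[OF p2] fv2 by fastforce
  have cFE: "\<forall>x\<in>V1. \<forall>y\<in>V1. \<forall>i j l.
        ((x, i), (y, j), l) \<in> dl_fedges L1 \<longleftrightarrow> ((f x, i), (f y, j), l) \<in> dl_fedges L2"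
  proof (intro ballI allI)
    fix x y i j l assume x: "x \<in> V1" and y: "y \<in> V1"
    show "((x, i), (y, j), l) \<in> dl_fedges L1 \<longleftrightarrow> ((f x, i), (f y, j), l) \<in> dl_fedges L2"
      using te_iff[OF i1 fe1 x y, of i j l] te_iff[OF i2 fe2 fV[OF x] fV[OF y], of i j l] h2f[OF x] h2f[OF y] B by simp
  qed
  have cF: "\<forall>x\<in>V1. dl_final L2 (f x) = dl_final L1 x \<and> dl_pi L2 (f x) = dl_pi L1 x"
  proof (intro ballI conjI)
    fix x assume x: "x \<in> V1"
    show "dl_final L2 (f x) = dl_final L1 x"
      using restrict_eqD[OF conjunct1[OF conjunct2[OF conjunct2[OF conjunct2[OF conjunct2[OF conjunct2[OF A]]]]]], of "h1 x"] h1V[OF x] h1'h1[OF x] h2'h1[OF x] by simp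
    show "dl_pi L2 (f x) = dl_pi L1 x"
      using restrict_eqD[OF conjunct2[OF conjunct2[OF conjunct2[OF conjunct2[OF conjunct2[OF conjunct2[OF A]]]]]], of "h1 x"] h1V[OF x] h1'h1[OF x] h2'h1[OF x] by simp
  qed
  have cP: "\<forall>u\<in>dl_fverts L1. \<forall>v\<in>Var L1 (fst u). dl_prev L2 (f (fst u), snd u) (f v) = dl_prev L1 u v"
  proof (intro ballI)
    fix u v assume u: "u \<in> dl_fverts L1" and v: "v \<in> Var L1 (fst u)"
    obtain x k where uxk: "u = (x, k)" by (cases u)
    have x: "x \<in> V1" using u fv1 uxk by blast
    have key1: "(h1 x, k) \<in> map_prod h1 id ` dl_fverts L1" using u uxk by force
    have fu: "(f x, k) \<in> dl_fverts L2" using cFV x u uxk by blast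
    have key2: "(h1 x, k) \<in> map_prod h2 id ` dl_fverts L2" using fu h2f[OF x] by force
    have eqp: "tasg h1 V1 (Var L1 x) (dl_prev L1 (x, k)) = tasg h2 V2 (Var L2 (f x)) (dl_prev L2 (f x, k))"
      using restrict_eqD2[OF conjunct2[OF conjunct2[OF B]] key1 key2] B h1'h1[OF x] h2'h1[OF x] by simp
    have v': "v \<in> Var L1 x" using v uxk by simp
    have fv: "f v \<in> Var L2 (f x)" using VarT[OF x] v' by blast
    have "dl_prev L1 (x, k) v = tasg h1 V1 (Var L1 x) (dl_prev L1 (x, k)) (h1 v)"
      using tasg_eval[OF i1 Var1sub v'] by simp
    also have "\<dots> = tasg h2 V2 (Var L2 (f x)) (dl_prev L2 (f x, k)) (h2 (f v))"
      using eqp h2f Var1sub v' by (metis subsetD)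
    also have "\<dots> = dl_prev L2 (f x, k) (f v)" using tasg_eval[OF i2 Var2sub fv] by simp
    finally show "dl_prev L2 (f (fst u), snd u) (f v) = dl_prev L1 u v" using uxk by simp
  qed
  have "is_iso b f L1 L2" unfolding is_iso_def V1_def[symmetric] V2_def[symmetric]
    by (intro conjI bf cE cO cR cFV cFE cF cP)
  thus ?thesis unfolding f_def h2'_def V2_def .
qed


lemma canvasE_D: "(u, v, l) \<in> canvasE L \<Longrightarrow> snd v = Suc (snd u) \<and> (fst u, fst v) \<in> relE L \<and> l = rel_label L (fst u) (fst v)"
  unfolding canvasE_def by auto

lemma fe_D: assumes "pseudo_landscape b L" "(u, v, l) \<in> dl_fedges L"
  shows "u \<in> dl_fverts L \<and> v \<in> dl_fverts L \<and> snd v = Suc (snd u) \<and> (fst u, fst v) \<in> relE L \<and> l = rel_label L (fst u) (fst v)"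
proof -
  have "u \<in> dl_fverts L \<and> v \<in> dl_fverts L \<and> (u, v, l) \<in> canvasE L" using pl_fe[OF assms(1)] assms(2) by fast
  thus ?thesis using canvasE_D by blast
qed

lemma indeg_uniq: assumes p: "pseudo_landscape b L" and fin: "finite (dl_fverts L)"
  and e1: "e1 \<in> dl_fedges L" and e2: "e2 \<in> dl_fedges L" and t: "fst (snd e1) = fst (snd e2)"
  shows "e1 = e2"
proof -
  obtain u1 w l1 where d1: "e1 = (u1, w, l1)" by (cases e1)
  obtain u2 w2 l2 where d2': "e2 = (u2, w2, l2)" by (cases e2)
  have "w2 = w" using t d1 d2' by simp
  hence d2: "e2 = (u2, w, l2)" using d2' by simp
  have w: "w \<in> dl_fverts L" using fe_D[OF p] e1 d1 by blast
  let ?S = "{e\<in>dl_fedges L. fst (snd e) = w}"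
  have "?S \<subseteq> (\<lambda>u. (u, w, rel_label L (fst u) (fst w))) ` dl_fverts L"
  proof
    fix e assume e: "e \<in> ?S"
    obtain u v l where ed: "e = (u, v, l)" by (cases e)
    have ee: "e \<in> dl_fedges L" and ew: "fst (snd e) = w" using e by blast+
    have ev1: "(u, v, l) \<in> dl_fedges L" using ee ed by simp
    have ev2: "v = w" using ew ed by simp
    have uu: "u \<in> dl_fverts L" and ll: "l = rel_label L (fst u) (fst v)" using fe_D[OF p ev1] by blast+
    show "e \<in> (\<lambda>u. (u, w, rel_label L (fst u) (fst w))) ` dl_fverts L"
      using uu ll ed ev2 by (intro image_eqI[where x=u]) simp_all
  qed
  hence finS: "finite ?S" using fin finite_surj by blast
  have "card ?S \<le> 1" using pl_indeg[OF p] w by blast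
  hence "\<forall>a\<in>?S. \<forall>b\<in>?S. a = b" using card_le_Suc0_iff_eq[OF finS] by simp
  moreover have "e1 \<in> ?S" using e1 d1 by simp
  moreover have "e2 \<in> ?S" using e2 d2 by simp
  ultimately show ?thesis by blast
qed

lemma parent_exists:
  assumes p: "pseudo_landscape b L" and g: "grounded L" and fin: "finite (dl_fverts L)"
    and v: "v \<in> dl_fverts L" and lv: "0 < snd v"
  shows "\<exists>e\<in>dl_fedges L. fst (snd e) = v"
proof (rule ccontr)
  assume no: "\<not> (\<exists>e\<in>dl_fedges L. fst (snd e) = v)"
  let ?R = "forest_rel L"
  let ?D = "{w. (v, w) \<in> ?R\<^sup>*}"
  have Rd: "\<And>a c. (a, c) \<in> ?R \<Longrightarrow> \<exists>l. (a, c, l) \<in> dl_fedges L" unfolding forest_rel_def by blast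
  have lev: "snd v \<le> snd w" if "(v, w) \<in> ?R\<^sup>*" for w
    using that
  proof (induction rule: rtrancl_induct)
    case base thus ?case by simp
  next
    case (step y z)
    obtain l where "(y, z, l) \<in> dl_fedges L" using Rd step(2) by blast
    hence "snd z = Suc (snd y)" using fe_D[OF p] by blast
    thus ?case using step(3) by simp
  qed
  have closed: "w \<in> ?D" if "(v, w) \<in> (?R \<union> ?R\<inverse>)\<^sup>*" for w
    using that
  proof (induction rule: rtrancl_induct)
    case base thus ?case by simp
  next
    case (step y z)
    from step(2) show ?case
    proof
      assume "(y, z) \<in> ?R" thus ?case using step(3) by (simp add: rtrancl_into_rtrancl)
    next
      assume "(y, z) \<in> ?R\<inverse>"
      hence zy: "(z, y) \<in> ?R" by simp
      then obtain l where zyl: "(z, y, l) \<in> dl_fedges L" using Rd by blast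
      have yD: "(v, y) \<in> ?R\<^sup>*" using step(3) by simp
      show ?case
      proof (cases "y = v")
        case True thus ?thesis using no zyl by force
      next
        case False
        then obtain y' where y': "(v, y') \<in> ?R\<^sup>*" "(y', y) \<in> ?R" using yD by (metis rtranclE)
        obtain l' where y'l: "(y', y, l') \<in> dl_fedges L" using Rd y'(2) by blast
        have "(z, y, l) = (y', y, l')" using indeg_uniq[OF p fin zyl y'l] by simp
        thus ?thesis using y'(1) by simp
      qed
    qed
  qed
  obtain w where w: "(v, w) \<in> (?R \<union> ?R\<inverse>)\<^sup>*" "snd w = 0" using g v unfolding grounded_def by blast
  have "snd v \<le> snd w" using lev closed[OF w(1)] by simp
  thus False using w(2) lv by simp
qed


lemma bij_facts:
  assumes bij: "bij_betw h V {..<card V}"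
  shows "inj_on h V" "\<And>x. x \<in> V \<Longrightarrow> h x < card V" "\<And>i. i < card V \<Longrightarrow> inv_into V h i \<in> V"
    "\<And>x. x \<in> V \<Longrightarrow> inv_into V h (h x) = x" "\<And>i. i < card V \<Longrightarrow> h (inv_into V h i) = i"
proof -
  show i: "inj_on h V" using bij bij_betw_def by blast
  show "\<And>x. x \<in> V \<Longrightarrow> h x < card V" using bij bij_betw_apply by fastforce
  show "\<And>i. i < card V \<Longrightarrow> inv_into V h i \<in> V" using bij_betw_apply[OF bij_betw_inv_into[OF bij]] by simp
  show "\<And>x. x \<in> V \<Longrightarrow> inv_into V h (h x) = x" using i by (simp add: inv_into_f_f)
  show "\<And>i. i < card V \<Longrightarrow> h (inv_into V h i) = i" using bij by (simp add: bij_betw_inv_into_right)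
qed

lemma relE_sub: "relE L \<subseteq> vg_verts L \<times> vg_verts L" unfolding relE_def by blast

lemma trel_sub: assumes "bij_betw h V {..<card V}" shows "trel h V r \<subseteq> {..<card V} \<times> {..<card V}"
  using bij_facts(2)[OF assms] unfolding trel_def by auto

lemma adj_deg:
  assumes bij: "bij_betw h (vg_verts L) {..<card (vg_verts L)}"
    and deg: "\<forall>x\<in>vg_verts L. rel_deg L x \<le> \<Delta>"
  shows "card {j. (i, j) \<in> trel h (vg_verts L) (relE L)} \<le> \<Delta>"
proof (cases "i \<in> h ` vg_verts L")
  case True
  then obtain x where x: "x \<in> vg_verts L" "i = h x" by blast
  note bf = bij_facts[OF bij]
  have "{j. (i, j) \<in> trel h (vg_verts L) (relE L)} = h ` {y. (x, y) \<in> relE L}"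
  proof (intro set_eqI iffI)
    fix j assume "j \<in> {j. (i, j) \<in> trel h (vg_verts L) (relE L)}"
    then obtain x' y where "(x', y) \<in> relE L" "x' \<in> vg_verts L" "y \<in> vg_verts L" "h x' = i" "j = h y"
      unfolding trel_def by auto
    moreover hence "x' = x" using x bf(1) inj_onD by metis
    ultimately show "j \<in> h ` {y. (x, y) \<in> relE L}" by blast
  next
    fix j assume "j \<in> h ` {y. (x, y) \<in> relE L}"
    then obtain y where "(x, y) \<in> relE L" "j = h y" by blast
    moreover hence "y \<in> vg_verts L" using relE_sub by blast
    ultimately show "j \<in> {j. (i, j) \<in> trel h (vg_verts L) (relE L)}"
      unfolding trel_def using x by force
  qed
  hence "card {j. (i, j) \<in> trel h (vg_verts L) (relE L)} = card (h ` {y. (x, y) \<in> relE L})" by simp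
  also have "\<dots> = card {y. (x, y) \<in> relE L}"
    by (rule card_image[OF inj_on_subset[OF bf(1)]]) (use relE_sub in blast)
  finally show ?thesis using deg x unfolding rel_deg_def by simp
next
  case False
  hence "{j. (i, j) \<in> trel h (vg_verts L) (relE L)} = {}" unfolding trel_def by auto
  thus ?thesis by simp
qed

lemma forest_mem:
  assumes p: "pseudo_landscape b L" and g: "grounded L" and finV: "finite (vg_verts L)"
    and finF: "finite (dl_fverts L)" and cF: "card (dl_fverts L) = N2"
    and bij: "bij_betw h (vg_verts L) {..<card (vg_verts L)}"
  shows "(map_prod h id ` dl_fverts L, te h ` dl_fedges L) \<in>
    forests (trel h (vg_verts L) (relE L))
      (restrict (\<lambda>(i, j). rel_label L (inv_into (vg_verts L) h i) (inv_into (vg_verts L) h j)) ({..<card (vg_verts L)} \<times> {..<card (vg_verts L)}))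
      (card (vg_verts L)) N2"
proof -
  define V where "V = vg_verts L"
  define n where "n = card V"
  note bf = bij_facts[OF bij, folded V_def n_def]
  have fv: "dl_fverts L \<subseteq> V \<times> UNIV" using pl_fv[OF p] unfolding V_def .
  have injF: "inj_on (map_prod h id) (dl_fverts L)"
  proof (rule inj_onI)
    fix a c assume "a \<in> dl_fverts L" "c \<in> dl_fverts L" "map_prod h id a = map_prod h id c"
    thus "a = c" using fv bf(1) by (cases a, cases c) (auto dest: inj_onD)
  qed
  have c1: "finite (map_prod h id ` dl_fverts L)" using finF by simp
  have c2: "card (map_prod h id ` dl_fverts L) = N2" using card_image[OF injF] cF by simp
  have c3: "fst ` (map_prod h id ` dl_fverts L) \<subseteq> {..<n}" using fv bf(2) by force
  have c4: "\<forall>(u, v, l)\<in>te h ` dl_fedges L. u \<in> map_prod h id ` dl_fverts L \<and> v \<in> map_prod h id ` dl_fverts L \<and>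
      snd v = Suc (snd u) \<and> (fst u, fst v) \<in> trel h V (relE L) \<and>
      l = restrict (\<lambda>(i, j). rel_label L (inv_into V h i) (inv_into V h j)) ({..<n} \<times> {..<n}) (fst u, fst v)"
  proof (intro ballI, clarify)
    fix a c l e assume e: "e \<in> dl_fedges L" and tee: "(a, c, l) = te h e"
    obtain u v l0 where ed: "e = (u, v, l0)" by (cases e)
    have ee: "(u, v, l0) \<in> dl_fedges L" using e ed by simp
    note D = fe_D[OF p ee]
    have uv: "u \<in> dl_fverts L" "v \<in> dl_fverts L" "snd v = Suc (snd u)" "(fst u, fst v) \<in> relE L"
      "l0 = rel_label L (fst u) (fst v)" using D by blast+
    have xV: "fst u \<in> V" "fst v \<in> V"
      using subsetD[OF fv uv(1)] subsetD[OF fv uv(2)] by (simp_all add: mem_Times_iff)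
    have acl: "a = map_prod h id u" "c = map_prod h id v" "l = l0"
      using tee ed unfolding te_def by (simp_all add: map_prod_def split_beta)
    show "a \<in> map_prod h id ` dl_fverts L \<and> c \<in> map_prod h id ` dl_fverts L \<and>
      snd c = Suc (snd a) \<and> (fst a, fst c) \<in> trel h V (relE L) \<and>
      l = restrict (\<lambda>(i, j). rel_label L (inv_into V h i) (inv_into V h j)) ({..<n} \<times> {..<n}) (fst a, fst c)"
    proof (intro conjI)
      show "a \<in> map_prod h id ` dl_fverts L" using acl uv by blast
      show "c \<in> map_prod h id ` dl_fverts L" using acl uv by blast
      show "snd c = Suc (snd a)" using acl uv by (simp add: map_prod_def split_beta)
      show "(fst a, fst c) \<in> trel h V (relE L)"
      proof -
        have "fst a = h (fst u)" "fst c = h (fst v)" using acl by (simp_all add: map_prod_def split_beta)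
        thus ?thesis using trel_iff[OF bf(1) xV, of "relE L"] uv(4) by simp
      qed
      show "l = restrict (\<lambda>(i, j). rel_label L (inv_into V h i) (inv_into V h j)) ({..<n} \<times> {..<n}) (fst a, fst c)"
        using acl uv xV bf(2,4) by (simp add: map_prod_def split_beta)
    qed
  qed
  have c5: "\<forall>e\<in>te h ` dl_fedges L. \<forall>e'\<in>te h ` dl_fedges L. fst (snd e) = fst (snd e') \<longrightarrow> e = e'"
  proof (intro ballI impI)
    fix a c assume a: "a \<in> te h ` dl_fedges L" and c: "c \<in> te h ` dl_fedges L" and t: "fst (snd a) = fst (snd c)"
    obtain e1 where e1: "e1 \<in> dl_fedges L" "a = te h e1" using a by blast
    obtain e2 where e2: "e2 \<in> dl_fedges L" "c = te h e2" using c by blast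
    obtain u1 v1 l1 where d1: "e1 = (u1, v1, l1)" by (cases e1)
    obtain u2 v2 l2 where d2: "e2 = (u2, v2, l2)" by (cases e2)
    have v1: "v1 \<in> dl_fverts L" using fe_D[OF p] e1(1) d1 by blast
    have v2: "v2 \<in> dl_fverts L" using fe_D[OF p] e2(1) d2 by blast
    have "map_prod h id v1 = map_prod h id v2" using t e1 e2 d1 d2 unfolding te_def by (simp add: map_prod_def split_beta)
    hence "v1 = v2" using injF v1 v2 inj_onD by metis
    hence "e1 = e2" using indeg_uniq[OF p finF e1(1) e2(1)] d1 d2 by simp
    thus "a = c" using e1 e2 by simp
  qed
  have c6: "\<forall>v\<in>map_prod h id ` dl_fverts L. 0 < snd v \<longrightarrow> (\<exists>e\<in>te h ` dl_fedges L. fst (snd e) = v)"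
  proof (intro ballI impI)
    fix v' assume v': "v' \<in> map_prod h id ` dl_fverts L" and lv: "0 < snd v'"
    obtain v where v0: "v' = map_prod h id v" "v \<in> dl_fverts L" using v' by (rule imageE)
    have v: "v \<in> dl_fverts L" "v' = map_prod h id v" using v0 by simp_all
    have "0 < snd v" using lv v by (simp add: map_prod_def split_beta)
    then obtain e where e: "e \<in> dl_fedges L" "fst (snd e) = v" using parent_exists[OF p g finF v(1)] by blast
    have "fst (snd (te h e)) = v'" using e v unfolding te_def by (simp add: map_prod_def split_beta)
    thus "\<exists>e\<in>te h ` dl_fedges L. fst (snd e) = v'" using e by blast
  qed
  show ?thesis unfolding forests_def V_def[symmetric] n_def[symmetric]
    using c1 c2 c3 c4 c5 c6 by blast
qed


definition AS :: "nat \<Rightarrow> nat \<Rightarrow> (nat \<Rightarrow> nat) set" where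
  "AS b N1 = (\<Union>W\<in>Pow {..<N1}. W \<rightarrow>\<^sub>E {..<b})"

definition Asup :: "nat \<Rightarrow> nat \<Rightarrow> nat \<Rightarrow> _" where
  "Asup b N1 p = (\<Union>n\<in>{..N1}. {n} \<times> Pow ({..<N1} \<times> {..<N1}) \<times>
     ({..<n} \<rightarrow>\<^sub>E Pow ({..<N1} \<times> {..<N1})) \<times> ({..<n} \<rightarrow>\<^sub>E Pow ({..<N1} \<times> {..<N1})) \<times>
     ({..<n} \<rightarrow>\<^sub>E Pow (AS b N1)) \<times> ({..<n} \<rightarrow>\<^sub>E {..<b}) \<times> ({..<n} \<rightarrow>\<^sub>E {..<p}) \<times>
     Pow ({..<N1} \<times> {..<N1}) \<times> (({..<n} \<times> {..<n}) \<rightarrow>\<^sub>E {..N1}) \<times> ({..<n} \<rightarrow>\<^sub>E Pow (AS b N1)))"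

lemma finite_AS: "finite (AS b N1)"
  unfolding AS_def by (intro finite_UN_I finite_PiE) (auto intro: finite_subset)

lemma finite_Asup: "finite (Asup b N1 p)"
  unfolding Asup_def using finite_AS
  by (intro finite_UN_I finite_cartesian_product finite_PiE finite_Pow_iff[THEN iffD2]) auto

lemma tasg_in: assumes "inj_on h V" "W \<subseteq> V" "\<sigma> \<in> assign b W"
  shows "tasg h V W \<sigma> \<in> (h ` W) \<rightarrow>\<^sub>E {..<b}"
proof -
  have "\<And>w. w \<in> W \<Longrightarrow> \<sigma> w < b" using assms(3) unfolding assign_def by auto
  thus ?thesis unfolding tasg_def using assms(1,2) by (auto simp: inv_into_f_f subsetD)
qed

lemma tasg_AS: assumes bij: "bij_betw h V {..<card V}" and N: "card V \<le> N1"
  and W: "W \<subseteq> V" and s: "\<sigma> \<in> assign b W"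
  shows "tasg h V W \<sigma> \<in> AS b N1"
proof -
  have "h ` W \<subseteq> {..<N1}" using bij_facts(2)[OF bij] W N by force
  thus ?thesis unfolding AS_def using tasg_in[OF bij_facts(1)[OF bij] W s] by blast
qed


lemma dec_final: "decoration_ok b p L \<Longrightarrow> dl_final L \<in> assign b (vg_verts L)"
  unfolding decoration_ok_def by (elim conjE) assumption
lemma dec_prev: "decoration_ok b p L \<Longrightarrow> (\<forall>u\<in>dl_fverts L. dl_prev L u \<in> Rc b L (fst u))"
  unfolding decoration_ok_def by (elim conjE) assumption
lemma dec_pi: "decoration_ok b p L \<Longrightarrow> (\<forall>x\<in>vg_verts L. dl_pi L x < p)"
  unfolding decoration_ok_def by (elim conjE) assumption

lemma trel_N1: assumes "bij_betw h V {..<card V}" "card V \<le> N1"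
  shows "trel h V r \<in> Pow ({..<N1} \<times> {..<N1})"
  using trel_sub[OF assms(1), of r] assms(2) by auto

lemma rel_label_le: assumes "finite (vg_verts L)" shows "rel_label L x y \<le> card (vg_verts L)"
  unfolding rel_label_def using relE_sub assms by (intro card_mono) auto

lemma acode_in:
  assumes p: "pseudo_landscape b L" and finV: "finite (vg_verts L)" and N: "card (vg_verts L) \<le> N1"
    and bij: "bij_betw h (vg_verts L) {..<card (vg_verts L)}" and dec: "decoration_ok b p L"
  shows "acode b L h \<in> Asup b N1 p"
proof -
  define V where "V = vg_verts L"
  define n where "n = card V"
  define h' where "h' = inv_into V h"
  have bij': "bij_betw h V {..<card V}" using bij unfolding V_def .
  note bf = bij_facts[OF bij', folded n_def h'_def]
  have N': "card V \<le> N1" using N unfolding V_def .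
  have VarV: "Var L x \<subseteq> V" for x
  proof
    fix y assume "y \<in> Var L x"
    hence "(x, y) \<in> vg_edges L" by (simp add: Var_def)
    hence "(x, y) \<in> vg_verts L \<times> vg_verts L" by (rule subsetD[OF vg_E[OF pl_vg[OF p]]])
    thus "y \<in> V" unfolding V_def by simp
  qed
  have ruleA: "dl_rule L (h' i) \<subseteq> assign b (Var L (h' i))" if "i < n" for i
  proof -
    have "h' i \<in> vg_verts L" using bf(3)[OF that] unfolding V_def .
    thus ?thesis using pl_rule[OF p] by (rule bspec[rotated])
  qed
  have c1: "n \<in> {..N1}" using N' unfolding n_def by simp
  have c2: "trel h V (vg_edges L) \<in> Pow ({..<N1} \<times> {..<N1})" by (rule trel_N1[OF bij' N'])
  have c3: "restrict (\<lambda>i. trel h V (vg_varord L (h' i))) {..<n} \<in> {..<n} \<rightarrow>\<^sub>E Pow ({..<N1} \<times> {..<N1})"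
    using trel_N1[OF bij' N'] by (simp add: restrict_PiE_iff)
  have c4: "restrict (\<lambda>i. trel h V (vg_clord L (h' i))) {..<n} \<in> {..<n} \<rightarrow>\<^sub>E Pow ({..<N1} \<times> {..<N1})"
    using trel_N1[OF bij' N'] by (simp add: restrict_PiE_iff)
  have c5: "restrict (\<lambda>i. tasg h V (Var L (h' i)) ` dl_rule L (h' i)) {..<n} \<in> {..<n} \<rightarrow>\<^sub>E Pow (AS b N1)"
  proof -
    have "tasg h V (Var L (h' i)) ` dl_rule L (h' i) \<subseteq> AS b N1" if "i < n" for i
      using tasg_AS[OF bij' N' VarV] ruleA[OF that] by blast
    thus ?thesis by (simp add: restrict_PiE_iff)
  qed
  have c6: "restrict (\<lambda>i. dl_final L (h' i)) {..<n} \<in> {..<n} \<rightarrow>\<^sub>E {..<b}"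
  proof -
    have "dl_final L (h' i) < b" if "i < n" for i
      using dec_final[OF dec] bf(3)[OF that] unfolding assign_def V_def by auto
    thus ?thesis by (simp add: restrict_PiE_iff)
  qed
  have c7: "restrict (\<lambda>i. dl_pi L (h' i)) {..<n} \<in> {..<n} \<rightarrow>\<^sub>E {..<p}"
  proof -
    have "dl_pi L (h' i) < p" if "i < n" for i
      using dec_pi[OF dec] bf(3)[OF that] unfolding V_def by auto
    thus ?thesis by (simp add: restrict_PiE_iff)
  qed
  have c8: "trel h V (relE L) \<in> Pow ({..<N1} \<times> {..<N1})" by (rule trel_N1[OF bij' N'])
  have c9: "restrict (\<lambda>(i, j). rel_label L (h' i) (h' j)) ({..<n} \<times> {..<n}) \<in> ({..<n} \<times> {..<n}) \<rightarrow>\<^sub>E {..N1}"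
  proof -
    have "rel_label L x y \<le> N1" for x y using rel_label_le[OF finV, of x y] N by simp
    thus ?thesis by (simp add: restrict_PiE_iff split_beta)
  qed
  have c10: "restrict (\<lambda>i. tasg h V (Var L (h' i)) ` Rc b L (h' i)) {..<n} \<in> {..<n} \<rightarrow>\<^sub>E Pow (AS b N1)"
  proof -
    have "tasg h V (Var L (h' i)) ` Rc b L (h' i) \<subseteq> AS b N1" if "i < n" for i
      using tasg_AS[OF bij' N' VarV] unfolding Rc_def by blast
    thus ?thesis by (simp add: restrict_PiE_iff)
  qed
  show ?thesis
    unfolding acode_def Let_def Asup_def V_def[symmetric] n_def[symmetric] h'_def[symmetric]
    apply (rule UN_I[where a=n])
    using c1 apply simp
    using c2 c3 c4 c5 c6 c7 c8 c9 c10 by (simp add: mem_Times_iff)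
qed

lemma prev_in:
  assumes p: "pseudo_landscape b L" and bij: "bij_betw h (vg_verts L) {..<card (vg_verts L)}"
    and dec: "decoration_ok b p L"
  shows "restrict (\<lambda>u. tasg h (vg_verts L) (Var L (inv_into (vg_verts L) h (fst u)))
            (dl_prev L (inv_into (vg_verts L) h (fst u), snd u))) (map_prod h id ` dl_fverts L)
    \<in> PiE (map_prod h id ` dl_fverts L) (\<lambda>u. restrict (\<lambda>i. tasg h (vg_verts L) (Var L (inv_into (vg_verts L) h i)) ` Rc b L (inv_into (vg_verts L) h i)) {..<card (vg_verts L)} (fst u))"
proof -
  note bf = bij_facts[OF bij]
  have fv: "dl_fverts L \<subseteq> vg_verts L \<times> UNIV" using pl_fv[OF p] .
  show ?thesis
  proof (subst restrict_PiE_iff, intro ballI)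
    fix u' assume "u' \<in> map_prod h id ` dl_fverts L"
    then obtain u where u0: "u' = map_prod h id u" "u \<in> dl_fverts L" by (rule imageE)
    obtain x k where uxk: "u = (x, k)" by (cases u)
    have x: "x \<in> vg_verts L" using subsetD[OF fv u0(2)] uxk by (simp add: mem_Times_iff)
    have u': "u' = (h x, k)" using u0 uxk by simp
    have pr: "dl_prev L (x, k) \<in> Rc b L x" using dec_prev[OF dec] u0(2) uxk by fastforce
    show "tasg h (vg_verts L) (Var L (inv_into (vg_verts L) h (fst u'))) (dl_prev L (inv_into (vg_verts L) h (fst u'), snd u'))
       \<in> restrict (\<lambda>i. tasg h (vg_verts L) (Var L (inv_into (vg_verts L) h i)) ` Rc b L (inv_into (vg_verts L) h i)) {..<card (vg_verts L)} (fst u')"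
      using u' bf(2)[OF x] bf(4)[OF x] pr by simp
  qed
qed


definition Code :: "nat \<Rightarrow> dland \<Rightarrow> _" where
  "Code b L = (acode b L (hL L), bcode L (hL L))"

definition Bset :: "nat \<Rightarrow> _ \<Rightarrow> _" where
  "Bset N2 a = (case a of (n, E, VO, CO, RU, FIN, PI, ADJ, LAB, RC) \<Rightarrow>
     {(F, E', P). (F, E') \<in> forests ADJ LAB n N2 \<and> P \<in> PiE F (\<lambda>u. RC (fst u))})"

lemma S_props:
  assumes "L \<in> grounded_dl_set b D \<Delta> \<beta> N1 N2 p"
  shows "pseudo_landscape b L" "grounded L" "finite (vg_verts L)" "card (vg_verts L) \<le> N1"
    "finite (dl_fverts L)" "card (dl_fverts L) = N2" "decoration_ok b p L"
    "\<forall>x\<in>vg_verts L. rel_deg L x \<le> \<Delta>" "\<forall>x\<in>vg_verts L. card (Rc b L x) \<le> \<beta>"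
proof -
  have l: "landscape b L" and g: "grounded L" and t: "of_type b D \<Delta> \<beta> N1 N2 p L"
    using assms unfolding grounded_dl_set_def by blast+
  show "pseudo_landscape b L" using l unfolding landscape_def by (elim conjE) assumption
  show "grounded L" by (rule g)
  have t': "(\<forall>x\<in>vg_verts L. card (Var L x) \<le> D \<and> rel_deg L x \<le> \<Delta> \<and> card (Rc b L x) \<le> \<beta>) \<and>
     finite (vg_verts L) \<and> card (vg_verts L) \<le> N1 \<and>
     finite (dl_fverts L) \<and> card (dl_fverts L) = N2 \<and> decoration_ok b p L"
    using t unfolding of_type_def .
  show "finite (vg_verts L)" "card (vg_verts L) \<le> N1"
    "finite (dl_fverts L)" "card (dl_fverts L) = N2" "decoration_ok b p L"
    using t' by blast+
  show "\<forall>x\<in>vg_verts L. rel_deg L x \<le> \<Delta>" "\<forall>x\<in>vg_verts L. card (Rc b L x) \<le> \<beta>"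
    using conjunct1[OF t'] by blast+
qed

lemma image_factor:
  assumes fin: "finite (\<Phi> ` S)" and eq: "\<And>x y. x \<in> S \<Longrightarrow> y \<in> S \<Longrightarrow> \<Phi> x = \<Phi> y \<Longrightarrow> k x = k y"
  shows "finite (k ` S) \<and> card (k ` S) \<le> card (\<Phi> ` S)"
proof -
  define g where "g c = k (SOME x. x \<in> S \<and> \<Phi> x = c)" for c
  have "k ` S = g ` (\<Phi> ` S)"
  proof (intro set_eqI iffI)
    fix z assume "z \<in> k ` S"
    then obtain x where x: "x \<in> S" "z = k x" by blast
    have "\<exists>y. y \<in> S \<and> \<Phi> y = \<Phi> x" using x by blast
    hence "(SOME y. y \<in> S \<and> \<Phi> y = \<Phi> x) \<in> S \<and> \<Phi> (SOME y. y \<in> S \<and> \<Phi> y = \<Phi> x) = \<Phi> x" by (rule someI_ex)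
    hence "g (\<Phi> x) = k x" unfolding g_def using eq x(1) by blast
    thus "z \<in> g ` (\<Phi> ` S)" using x by (metis imageI)
  next
    fix z assume "z \<in> g ` (\<Phi> ` S)"
    then obtain x where x: "x \<in> S" "z = g (\<Phi> x)" by blast
    have "\<exists>y. y \<in> S \<and> \<Phi> y = \<Phi> x" using x by blast
    hence "(SOME y. y \<in> S \<and> \<Phi> y = \<Phi> x) \<in> S \<and> \<Phi> (SOME y. y \<in> S \<and> \<Phi> y = \<Phi> x) = \<Phi> x" by (rule someI_ex)
    hence "g (\<Phi> x) = k x" unfolding g_def using eq x(1) by blast
    thus "z \<in> k ` S" using x by simp
  qed
  thus ?thesis using fin card_image_le[OF fin, of g] by simp
qed

lemma Bcard:
  assumes finF: "finite FS" and cardF: "\<forall>fe\<in>FS. finite (fst fe) \<and> card (fst fe) = N2"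
    and RC: "\<forall>fe\<in>FS. \<forall>u\<in>fst fe. finite (RC (fst u)) \<and> card (RC (fst u)) \<le> \<beta>"
  shows "finite {(F, E', P). (F, E') \<in> FS \<and> P \<in> PiE F (\<lambda>u. RC (fst u))} \<and>
    card {(F, E', P). (F, E') \<in> FS \<and> P \<in> PiE F (\<lambda>u. RC (fst u))} \<le> card FS * \<beta> ^ N2"
proof -
  let ?T = "SIGMA fe:FS. PiE (fst fe) (\<lambda>u. RC (fst u))"
  have eqs: "{(F, E', P). (F, E') \<in> FS \<and> P \<in> PiE F (\<lambda>u. RC (fst u))} = (\<lambda>(fe, P). (fst fe, snd fe, P)) ` ?T"
    by force
  have finB: "\<forall>fe\<in>FS. finite (PiE (fst fe) (\<lambda>u. RC (fst u)))"
    using cardF RC by (intro ballI finite_PiE) auto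
  have finT: "finite ?T" using finF finB by (intro finite_SigmaI) auto
  have "card ?T = (\<Sum>fe\<in>FS. card (PiE (fst fe) (\<lambda>u. RC (fst u))))"
    by (rule card_SigmaI[OF finF finB])
  also have "\<dots> \<le> (\<Sum>fe\<in>FS. \<beta> ^ N2)"
  proof (rule sum_mono)
    fix fe assume fe: "fe \<in> FS"
    have "card (PiE (fst fe) (\<lambda>u. RC (fst u))) = (\<Prod>u\<in>fst fe. card (RC (fst u)))"
      using cardF fe by (simp add: card_PiE)
    also have "\<dots> \<le> (\<Prod>u\<in>fst fe. \<beta>)" using RC fe by (intro prod_mono) auto
    also have "\<dots> = \<beta> ^ N2" using cardF fe by simp
    finally show "card (PiE (fst fe) (\<lambda>u. RC (fst u))) \<le> \<beta> ^ N2" .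
  qed
  also have "\<dots> = card FS * \<beta> ^ N2" by simp
  finally have "card ?T \<le> card FS * \<beta> ^ N2" .
  thus ?thesis unfolding eqs using finT card_image_le[OF finT] le_trans by blast
qed


lemma code_iso_S:
  assumes L1: "L1 \<in> grounded_dl_set b D \<Delta> \<beta> N1 N2 p" and L2: "L2 \<in> grounded_dl_set b D \<Delta> \<beta> N1 N2 p"
    and eq: "Code b L1 = Code b L2"
  shows "is_iso b (inv_into (vg_verts L2) (hL L2) \<circ> hL L1) L1 L2"
proof -
  have a: "acode b L1 (hL L1) = acode b L2 (hL L2)" and bb: "bcode L1 (hL L1) = bcode L2 (hL L2)"
    using eq unfolding Code_def by simp_all
  show ?thesis
    by (rule code_iso[OF S_props(1)[OF L1] S_props(1)[OF L2] hL_bij[OF S_props(3)[OF L1]] hL_bij[OF S_props(3)[OF L2]] a bb])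
qed

lemma k_eq:
  assumes L1: "L1 \<in> grounded_dl_set b D \<Delta> \<beta> N1 N2 p" and L2: "L2 \<in> grounded_dl_set b D \<Delta> \<beta> N1 N2 p"
    and eq: "Code b L1 = Code b L2"
  shows "iso_rel b (grounded_dl_set b D \<Delta> \<beta> N1 N2 p) `` {L1} = iso_rel b (grounded_dl_set b D \<Delta> \<beta> N1 N2 p) `` {L2}"
proof -
  let ?S = "grounded_dl_set b D \<Delta> \<beta> N1 N2 p"
  have dir: "z \<in> iso_rel b ?S `` {Y}" if X: "X \<in> ?S" and Y: "Y \<in> ?S" and e: "Code b X = Code b Y"
    and z: "z \<in> iso_rel b ?S `` {X}" for X Y z
  proof -
    have zS: "z \<in> ?S" and ex: "\<exists>f. is_iso b f X z" using z unfolding iso_rel_def by blast+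
    then obtain f where f: "is_iso b f X z" by blast
    have g: "is_iso b (inv_into (vg_verts X) (hL X) \<circ> hL Y) Y X" using code_iso_S[OF Y X] e by simp
    have "is_iso b (f \<circ> (inv_into (vg_verts X) (hL X) \<circ> hL Y)) Y z"
      by (rule iso_comp[OF g f S_props(1)[OF Y] S_props(1)[OF X] S_props(1)[OF zS]])
    thus ?thesis using Y zS unfolding iso_rel_def by blast
  qed
  show ?thesis using dir[OF L1 L2 eq] dir[OF L2 L1 eq[symmetric]] by blast
qed

lemma code_in_Sigma:
  assumes L: "L \<in> grounded_dl_set b D \<Delta> \<beta> N1 N2 p"
  shows "bcode L (hL L) \<in> Bset N2 (acode b L (hL L))"
proof -
  note sp = S_props[OF L]
  have bij: "bij_betw (hL L) (vg_verts L) {..<card (vg_verts L)}" by (rule hL_bij[OF sp(3)])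
  note fm = forest_mem[OF sp(1) sp(2) sp(3) sp(5) sp(6) bij]
  note pm = prev_in[OF sp(1) bij sp(7)]
  show ?thesis unfolding Bset_def acode_def bcode_def Let_def
    using fm pm by simp
qed


lemma Bset_card:
  assumes L: "L \<in> grounded_dl_set b D \<Delta> \<beta> N1 N2 p"
  shows "finite (Bset N2 (acode b L (hL L))) \<and>
    card (Bset N2 (acode b L (hL L))) \<le> 2 ^ N1 * (\<Sum>k\<le>N2. (\<Delta>*N2) choose k) * \<beta> ^ N2"
proof -
  note sp = S_props[OF L]
  define h where "h = hL L"
  define V where "V = vg_verts L"
  define n where "n = card V"
  define h' where "h' = inv_into V h"
  have bij: "bij_betw h V {..<card V}" unfolding h_def V_def by (rule hL_bij[OF sp(3)])
  define ADJ where "ADJ = trel h V (relE L)"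
  define LAB where "LAB = restrict (\<lambda>(i, j). rel_label L (h' i) (h' j)) ({..<n} \<times> {..<n})"
  define RC where "RC = restrict (\<lambda>i. tasg h V (Var L (h' i)) ` Rc b L (h' i)) {..<n}"
  have Beq: "Bset N2 (acode b L (hL L)) = {(F, E', P). (F, E') \<in> forests ADJ LAB n N2 \<and> P \<in> PiE F (\<lambda>u. RC (fst u))}"
    unfolding Bset_def acode_def Let_def ADJ_def LAB_def RC_def h'_def n_def V_def h_def by simp
  have fc: "fctx ADJ n \<Delta>"
    unfolding fctx_def ADJ_def n_def
  proof (intro conjI allI)
    show "trel h V (relE L) \<subseteq> {..<card V} \<times> {..<card V}" by (rule trel_sub[OF bij])
    fix x show "card {z. (x, z) \<in> trel h V (relE L)} \<le> \<Delta>"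
      unfolding V_def by (rule adj_deg[OF bij[unfolded V_def] sp(8)])
  qed
  have FC: "finite (forests ADJ LAB n N2) \<and> card (forests ADJ LAB n N2) \<le> 2 ^ n * (\<Sum>k\<le>N2. (\<Delta>*N2) choose k)"
    by (rule fctx.forests_card[OF fc])
  have cardF: "\<forall>fe\<in>forests ADJ LAB n N2. finite (fst fe) \<and> card (fst fe) = N2"
    unfolding forests_def by auto
  have RCp: "\<forall>fe\<in>forests ADJ LAB n N2. \<forall>u\<in>fst fe. finite (RC (fst u)) \<and> card (RC (fst u)) \<le> \<beta>"
  proof (intro ballI)
    fix fe u assume fe: "fe \<in> forests ADJ LAB n N2" and u: "u \<in> fst fe"
    obtain F E' where fee: "fe = (F, E')" by (cases fe)
    have "(F, E') \<in> forests ADJ LAB n N2" using fe fee by simp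
    hence Fs: "fst ` F \<subseteq> {..<n}" unfolding forests_def by simp
    have uF: "u \<in> F" using u fee by simp
    have un: "fst u < n" using subsetD[OF Fs imageI[OF uF]] by simp
    define x where "x = h' (fst u)"
    have x: "x \<in> V" unfolding x_def h'_def using bij_facts(3)[OF bij] un n_def by simp
    have rcx: "RC (fst u) = tasg h V (Var L x) ` Rc b L x" unfolding RC_def x_def using un by simp
    have VarV: "Var L x \<subseteq> V"
    proof
      fix y assume "y \<in> Var L x"
      hence "(x, y) \<in> vg_edges L" by (simp add: Var_def)
      hence "(x, y) \<in> vg_verts L \<times> vg_verts L" by (rule subsetD[OF vg_E[OF pl_vg[OF sp(1)]]])
      thus "y \<in> V" unfolding V_def by simp
    qed
    have finV: "finite V" unfolding V_def by (rule sp(3))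
    have finRc: "finite (Rc b L x)"
    proof -
      have "finite (assign b (Var L x))" unfolding assign_def
        using finite_subset[OF VarV finV] by (intro finite_PiE) auto
      thus ?thesis unfolding Rc_def by simp
    qed
    have cRc: "card (Rc b L x) \<le> \<beta>" using sp(9) x unfolding V_def by blast
    show "finite (RC (fst u)) \<and> card (RC (fst u)) \<le> \<beta>"
      using rcx finRc cRc card_image_le[OF finRc, of "tasg h V (Var L x)"] by simp
  qed
  have B: "finite {(F, E', P). (F, E') \<in> forests ADJ LAB n N2 \<and> P \<in> PiE F (\<lambda>u. RC (fst u))} \<and>
    card {(F, E', P). (F, E') \<in> forests ADJ LAB n N2 \<and> P \<in> PiE F (\<lambda>u. RC (fst u))} \<le> card (forests ADJ LAB n N2) * \<beta> ^ N2"
    by (rule Bcard[OF conjunct1[OF FC] cardF RCp])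
  have nN: "n \<le> N1" unfolding n_def V_def by (rule sp(4))
  have "card (forests ADJ LAB n N2) * \<beta> ^ N2 \<le> 2 ^ n * (\<Sum>k\<le>N2. (\<Delta>*N2) choose k) * \<beta> ^ N2"
    using FC by simp
  also have "\<dots> \<le> 2 ^ N1 * (\<Sum>k\<le>N2. (\<Delta>*N2) choose k) * \<beta> ^ N2"
    using nN by (intro mult_le_mono1 mult_le_mono1) simp
  finally have X: "card (forests ADJ LAB n N2) * \<beta> ^ N2 \<le> 2 ^ N1 * (\<Sum>k\<le>N2. (\<Delta>*N2) choose k) * \<beta> ^ N2" .
  show ?thesis unfolding Beq by (intro conjI conjunct1[OF B] le_trans[OF conjunct2[OF B] X])
qed


lemma count_main:
  assumes D2: "\<Delta> \<ge> 2" and N2: "N2 \<ge> 1"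
  shows "finite (grounded_dl_set b D \<Delta> \<beta> N1 N2 p // iso_rel b (grounded_dl_set b D \<Delta> \<beta> N1 N2 p)) \<and>
    card (grounded_dl_set b D \<Delta> \<beta> N1 N2 p // iso_rel b (grounded_dl_set b D \<Delta> \<beta> N1 N2 p))
      \<le> card (Asup b N1 p) * (2 ^ N1 * (\<Sum>k\<le>N2. (\<Delta>*N2) choose k) * \<beta> ^ N2)"
proof -
  define S where "S = grounded_dl_set b D \<Delta> \<beta> N1 N2 p"
  define M where "M = 2 ^ N1 * (\<Sum>k\<le>N2. (\<Delta>*N2) choose k) * \<beta> ^ N2"
  define I where "I = (\<lambda>L. acode b L (hL L)) ` S"
  have quot: "S // iso_rel b S = (\<lambda>L. iso_rel b S `` {L}) ` S" unfolding quotient_def by blast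
  have IA: "I \<subseteq> Asup b N1 p"
  proof
    fix a assume "a \<in> I"
    then obtain L where L: "L \<in> S" "a = acode b L (hL L)" unfolding I_def by blast
    note sp = S_props[OF L(1)[unfolded S_def]]
    show "a \<in> Asup b N1 p" using acode_in[OF sp(1) sp(3) sp(4) hL_bij[OF sp(3)] sp(7)] L(2) by simp
  qed
  have finI: "finite I" using finite_subset[OF IA finite_Asup] .
  have cardI: "card I \<le> card (Asup b N1 p)" using card_mono[OF finite_Asup IA] .
  have finB: "\<forall>a\<in>I. finite (Bset N2 a)" and cardB: "\<forall>a\<in>I. card (Bset N2 a) \<le> M"
    unfolding I_def M_def S_def using Bset_card by blast+
  have sub: "Code b ` S \<subseteq> Sigma I (Bset N2)"
  proof
    fix c assume "c \<in> Code b ` S"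
    then obtain L where L: "L \<in> S" "c = Code b L" by blast
    have "acode b L (hL L) \<in> I" unfolding I_def using L(1) by blast
    moreover have "bcode L (hL L) \<in> Bset N2 (acode b L (hL L))" using code_in_Sigma L(1) unfolding S_def by blast
    ultimately show "c \<in> Sigma I (Bset N2)" using L(2) unfolding Code_def by blast
  qed
  have finSig: "finite (Sigma I (Bset N2))" using finI finB by (intro finite_SigmaI) auto
  have "card (Sigma I (Bset N2)) = (\<Sum>a\<in>I. card (Bset N2 a))" by (rule card_SigmaI[OF finI finB])
  also have "\<dots> \<le> card I * M" using cardB sum_bounded_above[of I "\<lambda>a. card (Bset N2 a)" M] by simp
  also have "\<dots> \<le> card (Asup b N1 p) * M" using cardI by simp
  finally have cS: "card (Sigma I (Bset N2)) \<le> card (Asup b N1 p) * M" .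
  have finC: "finite (Code b ` S)" using finite_subset[OF sub finSig] .
  have cC: "card (Code b ` S) \<le> card (Sigma I (Bset N2))" using card_mono[OF finSig sub] .
  have keq: "\<And>x y. x \<in> S \<Longrightarrow> y \<in> S \<Longrightarrow> Code b x = Code b y \<Longrightarrow> iso_rel b S `` {x} = iso_rel b S `` {y}"
    unfolding S_def by (rule k_eq)
  have IF: "finite ((\<lambda>L. iso_rel b S `` {L}) ` S) \<and> card ((\<lambda>L. iso_rel b S `` {L}) ` S) \<le> card (Code b ` S)"
    by (rule image_factor[OF finC keq])
  show ?thesis unfolding S_def[symmetric] M_def[symmetric] quot
    using IF cC cS by simp
qed


lemma S_empty_N1: assumes "N1 = 0" "N2 \<ge> 1" shows "grounded_dl_set b D \<Delta> \<beta> N1 N2 p = {}"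
proof (rule ccontr)
  assume "grounded_dl_set b D \<Delta> \<beta> N1 N2 p \<noteq> {}"
  then obtain L where L: "L \<in> grounded_dl_set b D \<Delta> \<beta> N1 N2 p" by blast
  note sp = S_props[OF L]
  have "vg_verts L = {}" using sp(3) sp(4) assms(1) by simp
  hence "dl_fverts L = {}" using pl_fv[OF sp(1)] by blast
  thus False using sp(6) assms(2) by simp
qed

lemma sum_binom_bound:
  assumes "\<Delta> \<ge> 2"
  shows "real (\<Sum>k\<le>N2. (\<Delta>*N2) choose k) \<le> real (N2 + 1) * (real \<Delta> ^ \<Delta> / real (\<Delta> - 1) ^ (\<Delta> - 1)) ^ N2"
proof -
  have "real (\<Sum>k\<le>N2. (\<Delta>*N2) choose k) = (\<Sum>k\<le>N2. real ((\<Delta>*N2) choose k))" by simp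
  also have "\<dots> \<le> real (card {..N2}) * (real \<Delta> ^ \<Delta> / real (\<Delta> - 1) ^ (\<Delta> - 1)) ^ N2"
    by (rule sum_bounded_above) (use binom_term_bound[OF assms] in auto)
  finally show ?thesis by simp
qed

theorem lemma3p5:
  fixes b D \<Delta> N1 p :: nat
  assumes "b \<ge> 2" and "\<Delta> \<ge> 2"
  shows "\<exists>C::real. \<forall>\<beta> N2 :: nat. N2 \<ge> 1 \<longrightarrow>
           (let S = grounded_dl_set b D \<Delta> \<beta> N1 N2 p in
            finite (S // iso_rel b S) \<and>
            real (card (S // iso_rel b S)) \<le>
              C * real N2 ^ N1 * (real \<Delta> ^ \<Delta> / real (\<Delta> - 1) ^ (\<Delta> - 1) * real \<beta>) ^ N2)"
proof -
  define K where "K = real \<Delta> ^ \<Delta> / real (\<Delta> - 1) ^ (\<Delta> - 1)"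
  define C0 where "C0 = card (Asup b N1 p)"
  have K0: "K \<ge> 0" unfolding K_def by simp
  show ?thesis
  proof (intro exI[of _ "real C0 * 2 ^ N1 * 2"] allI impI)
    fix \<beta> N2 :: nat assume N2: "N2 \<ge> 1"
    define S where "S = grounded_dl_set b D \<Delta> \<beta> N1 N2 p"
    have cm: "finite (S // iso_rel b S) \<and>
      card (S // iso_rel b S) \<le> C0 * (2 ^ N1 * (\<Sum>k\<le>N2. (\<Delta>*N2) choose k) * \<beta> ^ N2)"
      unfolding S_def C0_def by (rule count_main[OF assms(2) N2])
    have rhs0: "0 \<le> real C0 * 2 ^ N1 * 2 * real N2 ^ N1 * (K * real \<beta>) ^ N2" using K0 by simp
    have bound: "real (card (S // iso_rel b S)) \<le> real C0 * 2 ^ N1 * 2 * real N2 ^ N1 * (K * real \<beta>) ^ N2"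
    proof (cases "N1 = 0")
      case True
      hence "S = {}" unfolding S_def using S_empty_N1 N2 by blast
      hence "card (S // iso_rel b S) = 0" by simp
      thus ?thesis using rhs0 by simp
    next
      case False
      have "real (card (S // iso_rel b S)) \<le> real (C0 * (2 ^ N1 * (\<Sum>k\<le>N2. (\<Delta>*N2) choose k) * \<beta> ^ N2))"
        using conjunct2[OF cm] by (simp only: of_nat_le_iff)
      also have "\<dots> = real C0 * (2 ^ N1 * real (\<Sum>k\<le>N2. (\<Delta>*N2) choose k) * real \<beta> ^ N2)"
        by (simp only: of_nat_mult of_nat_power of_nat_numeral)
      also have "\<dots> \<le> real C0 * (2 ^ N1 * (real (N2 + 1) * K ^ N2) * real \<beta> ^ N2)"
        using sum_binom_bound[OF assms(2), of N2] unfolding K_def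
        by (intro mult_left_mono mult_right_mono) simp_all
      also have "\<dots> \<le> real C0 * (2 ^ N1 * ((2 * real N2 ^ N1) * K ^ N2) * real \<beta> ^ N2)"
      proof -
        have "N2 \<le> N2 ^ N1" using False N2 by (intro self_le_power) auto
        hence a1: "real N2 \<le> real N2 ^ N1" by (metis of_nat_le_iff of_nat_power)
        have a2: "1 \<le> real N2" using N2 by simp
        have "real (N2 + 1) = real N2 + 1" by simp
        hence "real (N2 + 1) \<le> 2 * real N2 ^ N1" using a1 a2 by linarith
        thus ?thesis using K0 by (intro mult_left_mono mult_right_mono) simp_all
      qed
      also have "\<dots> = real C0 * 2 ^ N1 * 2 * real N2 ^ N1 * (K * real \<beta>) ^ N2"
        by (simp add: power_mult_distrib)
      finally show ?thesis .
    qed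
    show "let S = grounded_dl_set b D \<Delta> \<beta> N1 N2 p in
            finite (S // iso_rel b S) \<and>
            real (card (S // iso_rel b S)) \<le>
              real C0 * 2 ^ N1 * 2 * real N2 ^ N1 * (real \<Delta> ^ \<Delta> / real (\<Delta> - 1) ^ (\<Delta> - 1) * real \<beta>) ^ N2"
      unfolding Let_def S_def[symmetric] K_def[symmetric] using conjunct1[OF cm] bound by blast
  qed
qed


end
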